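(* The category $\mathcal{SG}$ of special groups is equivalent to the category $\mathcal{SMF}$ of special multifields, via the functors $G\mapsto M(G)=G\cup\{0\}$ and $F\mapsto F^\bullet=F\setminus\{0\}$.
   Context: A special group is $(G,-1,\equiv)$ with $G$ a group of exponent 2, $-1\in G$, $\equiv$ a relation on $G\times G$ satisfying: (SG0) equivalence relation; (SG1) $\langle a,b\rangle\equiv\langle b,a\rangle$; (SG2) $\langle a,-a\rangle\equiv\langle1,-1\rangle$ with $-a=(-1)a$; (SG3) $\langle a,b\rangle\equiv\langle c,d\rangle\Rightarrow ab=cd$; (SG4) $\langle a,b\rangle\equiv\langle c,d\rangle\Rightarrow\langle a,-c\rangle\equiv\langle -b,d\rangle$; (SG5) $\langle a,b\rangle\equiv\langle c,d\rangle\Rightarrow\langle ga,gb\rangle\equiv\langle gc,gd\rangle$; (SG6) the relation on $G^3$ given by $\langle a_1,a_2,a_3\rangle\equiv\langle b_1,b_2,b_3\rangle$ iff $\exists x,y,z$ with $\langle a_1,x\rangle\equiv\langle b_1,y\rangle$, $\langle a_2,a_3\rangle\equiv\langle x,z\rangle$, $\langle b_2,b_3\rangle\equiv\langle y,z\rangle$ is transitive. $D_G(a,b)=\{c:\exists d,\ \langle c,d\rangle\equiv\langle a,b\rangle\}$. Morphisms of special groups are group homomorphisms $f$ with $f(-1)=-1$ and $\langle a,b\rangle\equiv\langle c,d\rangle\Rightarrow\langle f(a),f(b)\rangle\equiv\langle f(c),f(d)\rangle$. $M(G)=G\cup\{0\}$ ($0$ new) with $a\cdot b=0$ if $a=0$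 or $b=0$, the product of $G$ otherwise; $-a=(-1)a$; $a+b=\{b\}$ if $a=0$, $\{a\}$ if $b=0$, $M(G)$ if $a=-b\ne0$, $D_G(a,b)$ otherwise. On morphisms, $M(f)$ extends $f$ by $0\mapsto0$. A multiring is a tuple $(R,+,\cdot,-,0,1)$ with $+:R\times R\to\mathcal P(R)\setminus\{\emptyset\}$ satisfying: $z\in x+y\Rightarrow x\in z+(-y)$ and $y\in(-x)+z$; $y\in0+x\iff y=x$; $+$ associative and commutative; $(R,\cdot,1)$ a commutative monoid; $a0=0$; $c\in a+b\Rightarrow cd\in ad+bd$; multifield: nonzero elements invertible; morphisms preserve $+$ (as $c\in a+b\Rightarrow f(c)\in f(a)+f(b)$), $-$, $0$, $\cdot$, $1$. A special multifield is a multifield $F$ such that, with $F^\bullet=F\setminus\{0\}$: (i) $a^2=1$ for $a\in F^\bullet$; (ii) $a+(-a)=F$ for $a\in F^\bullet$; (iii) $ab=cd$, $a\in c+d\Rightarrow c\in a+b$; (iv) $ab=cd=ef$, $a\in c+d$, $c\in e+f\Rightarrow a\in e+f$; (v) if there are $x,y,z\in F^\bullet$ with $ax=cy$, $a=xz$, $c=yz$, $a\in c+y$, $b\in x+z$, $d\in y+z$, then there are $t,v,w\in F^\bullet$ with $bt=cv$, $b=tw$, $c=vw$, $b\in c+v$, $a\in t+w$, $d\in v+w$ (all letters in $F^\bullet$). $F^\bullet$ is a special group with $\langle a,b\rangle\equiv\langle c,d\rangle$ iff $ab=cd$ and $a\in c+d$; morphisms are restricted. $\mathcal{SMF}$ has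 special multifields and multiring morphisms. *)

theory Defs
  imports Main
begin

record 'a sgroup =
  sg_carrier :: "'a set"
  sg_mult :: "'a \<Rightarrow> 'a \<Rightarrow> 'a"
  sg_one :: 'a
  sg_mone :: 'a
  sg_equiv :: "'a \<Rightarrow> 'a \<Rightarrow> 'a \<Rightarrow> 'a \<Rightarrow> bool"

definition sg_neg :: "'a sgroup \<Rightarrow> 'a \<Rightarrow> 'a" where
  "sg_neg G a = sg_mult G (sg_mone G) a"

definition sg_equiv3 :: "'a sgroup \<Rightarrow> 'a \<Rightarrow> 'a \<Rightarrow> 'a \<Rightarrow> 'a \<Rightarrow> 'a \<Rightarrow> 'a \<Rightarrow> bool" where
  "sg_equiv3 G a1 a2 a3 b1 b2 b3 \<longleftrightarrow>
     (\<exists>x\<in>sg_carrier G. \<exists>y\<in>sg_carrier G. \<exists>z\<in>sg_carrier G.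
        sg_equiv G a1 x b1 y \<and> sg_equiv G a2 a3 x z \<and> sg_equiv G b2 b3 y z)"

definition sg_D :: "'a sgroup \<Rightarrow> 'a \<Rightarrow> 'a \<Rightarrow> 'a set" where
  "sg_D G a b = {c \<in> sg_carrier G. \<exists>d\<in>sg_carrier G. sg_equiv G c d a b}"

definition is_special_group :: "'a sgroup \<Rightarrow> bool" where
  "is_special_group G \<longleftrightarrow>
    (let S = sg_carrier G; m = sg_mult G; e = sg_one G; neg = sg_neg G; eq = sg_equiv G in
    \<comment> \<open>group of exponent 2\<close>
    (\<forall>a\<in>S. \<forall>b\<in>S. m a b \<in> S) \<and> e \<in> S \<and>
    (\<forall>a\<in>S. \<forall>b\<in>S. \<forall>c\<in>S. m (m a b) c = m a (m b c)) \<and>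
    (\<forall>a\<in>S. m e a = a \<and> m a e = a) \<and>
    (\<forall>a\<in>S. m a a = e) \<and>
    sg_mone G \<in> S \<and>
    \<comment> \<open>the relation lives on S \<times> S\<close>
    (\<forall>a b c d. eq a b c d \<longrightarrow> a \<in> S \<and> b \<in> S \<and> c \<in> S \<and> d \<in> S) \<and>
    \<comment> \<open>SG0\<close>
    (\<forall>a\<in>S. \<forall>b\<in>S. eq a b a b) \<and>
    (\<forall>a b c d. eq a b c d \<longrightarrow> eq c d a b) \<and>
    (\<forall>a b c d e' f. eq a b c d \<longrightarrow> eq c d e' f \<longrightarrow> eq a b e' f) \<and>
    \<comment> \<open>SG1\<close>
    (\<forall>a\<in>S. \<forall>b\<in>S. eq a b b a) \<and>
    \<comment> \<open>SG2\<close>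
    (\<forall>a\<in>S. eq a (neg a) e (sg_mone G)) \<and>
    \<comment> \<open>SG3\<close>
    (\<forall>a b c d. eq a b c d \<longrightarrow> m a b = m c d) \<and>
    \<comment> \<open>SG4\<close>
    (\<forall>a b c d. eq a b c d \<longrightarrow> eq a (neg c) (neg b) d) \<and>
    \<comment> \<open>SG5\<close>
    (\<forall>a b c d. \<forall>g\<in>S. eq a b c d \<longrightarrow> eq (m g a) (m g b) (m g c) (m g d)) \<and>
    \<comment> \<open>SG6\<close>
    (\<forall>a1\<in>S. \<forall>a2\<in>S. \<forall>a3\<in>S. \<forall>b1\<in>S. \<forall>b2\<in>S. \<forall>b3\<in>S. \<forall>c1\<in>S. \<forall>c2\<in>S. \<forall>c3\<in>S.
       sg_equiv3 G a1 a2 a3 b1 b2 b3 \<longrightarrow> sg_equiv3 G b1 b2 b3 c1 c2 c3 \<longrightarrow>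
       sg_equiv3 G a1 a2 a3 c1 c2 c3))"

definition sg_morphism :: "'a sgroup \<Rightarrow> 'b sgroup \<Rightarrow> ('a \<Rightarrow> 'b) \<Rightarrow> bool" where
  "sg_morphism G H f \<longleftrightarrow>
    (\<forall>a\<in>sg_carrier G. f a \<in> sg_carrier H) \<and>
    (\<forall>a\<in>sg_carrier G. \<forall>b\<in>sg_carrier G. f (sg_mult G a b) = sg_mult H (f a) (f b)) \<and>
    f (sg_mone G) = sg_mone H \<and>
    (\<forall>a b c d. sg_equiv G a b c d \<longrightarrow> sg_equiv H (f a) (f b) (f c) (f d))"

definition sg_iso :: "'a sgroup \<Rightarrow> 'b sgroup \<Rightarrow> ('a \<Rightarrow> 'b) \<Rightarrow> bool" where
  "sg_iso G H f \<longleftrightarrow> sg_morphism G H f \<and>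
    (\<exists>g. sg_morphism H G g \<and> (\<forall>x\<in>sg_carrier G. g (f x) = x) \<and> (\<forall>y\<in>sg_carrier H. f (g y) = y))"

record 'a mring =
  mr_carrier :: "'a set"
  mr_add :: "'a \<Rightarrow> 'a \<Rightarrow> 'a set"
  mr_mult :: "'a \<Rightarrow> 'a \<Rightarrow> 'a"
  mr_neg :: "'a \<Rightarrow> 'a"
  mr_zero :: 'a
  mr_one :: 'a

definition mr_setadd :: "'a mring \<Rightarrow> 'a set \<Rightarrow> 'a \<Rightarrow> 'a set" where
  "mr_setadd R A z = (\<Union>t\<in>A. mr_add R t z)"

definition is_multiring :: "'a mring \<Rightarrow> bool" where
  "is_multiring R \<longleftrightarrow>
    (let S = mr_carrier R; p = mr_add R; m = mr_mult R; n = mr_neg R; z = mr_zero R; e = mr_one R in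
    z \<in> S \<and> e \<in> S \<and>
    (\<forall>x\<in>S. n x \<in> S) \<and>
    (\<forall>x\<in>S. \<forall>y\<in>S. m x y \<in> S) \<and>
    (\<forall>x\<in>S. \<forall>y\<in>S. p x y \<subseteq> S \<and> p x y \<noteq> {}) \<and>
    (\<forall>x\<in>S. \<forall>y\<in>S. \<forall>w\<in>S. w \<in> p x y \<longrightarrow> x \<in> p w (n y) \<and> y \<in> p (n x) w) \<and>
    (\<forall>x\<in>S. \<forall>y\<in>S. y \<in> p z x \<longleftrightarrow> y = x) \<and>
    (\<forall>x\<in>S. \<forall>y\<in>S. \<forall>w\<in>S. (\<Union>t\<in>p y w. p x t) = (\<Union>t\<in>p x y. p t w)) \<and>
    (\<forall>x\<in>S. \<forall>y\<in>S. p x y = p y x) \<and>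
    (\<forall>x\<in>S. \<forall>y\<in>S. \<forall>w\<in>S. m (m x y) w = m x (m y w)) \<and>
    (\<forall>x\<in>S. \<forall>y\<in>S. m x y = m y x) \<and>
    (\<forall>x\<in>S. m e x = x) \<and>
    (\<forall>x\<in>S. m x z = z) \<and>
    (\<forall>a\<in>S. \<forall>b\<in>S. \<forall>c\<in>S. \<forall>d\<in>S. c \<in> p a b \<longrightarrow> m c d \<in> p (m a d) (m b d)))"

definition is_multifield :: "'a mring \<Rightarrow> bool" where
  "is_multifield R \<longleftrightarrow> is_multiring R \<and> mr_one R \<noteq> mr_zero R \<and>
    (\<forall>a\<in>mr_carrier R - {mr_zero R}. \<exists>b\<in>mr_carrier R. mr_mult R a b = mr_one R)"

definition mr_morphism :: "'a mring \<Rightarrow> 'b mring \<Rightarrow> ('a \<Rightarrow> 'b) \<Rightarrow> bool" where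
  "mr_morphism R T f \<longleftrightarrow>
    (\<forall>a\<in>mr_carrier R. f a \<in> mr_carrier T) \<and>
    (\<forall>a\<in>mr_carrier R. \<forall>b\<in>mr_carrier R. \<forall>c\<in>mr_carrier R.
        c \<in> mr_add R a b \<longrightarrow> f c \<in> mr_add T (f a) (f b)) \<and>
    (\<forall>a\<in>mr_carrier R. f (mr_neg R a) = mr_neg T (f a)) \<and>
    f (mr_zero R) = mr_zero T \<and>
    (\<forall>a\<in>mr_carrier R. \<forall>b\<in>mr_carrier R. f (mr_mult R a b) = mr_mult T (f a) (f b)) \<and>
    f (mr_one R) = mr_one T"

definition mr_iso :: "'a mring \<Rightarrow> 'b mring \<Rightarrow> ('a \<Rightarrow> 'b) \<Rightarrow> bool" where
  "mr_iso R T f \<longleftrightarrow> mr_morphism R T f \<and>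
    (\<exists>g. mr_morphism T R g \<and> (\<forall>x\<in>mr_carrier R. g (f x) = x) \<and> (\<forall>y\<in>mr_carrier T. f (g y) = y))"

definition is_special_multifield :: "'a mring \<Rightarrow> bool" where
  "is_special_multifield F \<longleftrightarrow> is_multifield F \<and>
    (let B = mr_carrier F - {mr_zero F}; p = mr_add F; m = mr_mult F; n = mr_neg F in
    \<comment> \<open>(i)\<close>
    (\<forall>a\<in>B. m a a = mr_one F) \<and>
    \<comment> \<open>(ii)\<close>
    (\<forall>a\<in>B. p a (n a) = mr_carrier F) \<and>
    \<comment> \<open>(iii)\<close>
    (\<forall>a\<in>B. \<forall>b\<in>B. \<forall>c\<in>B. \<forall>d\<in>B. m a b = m c d \<longrightarrow> a \<in> p c d \<longrightarrow> c \<in> p a b) \<and>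
    \<comment> \<open>(iv)\<close>
    (\<forall>a\<in>B. \<forall>b\<in>B. \<forall>c\<in>B. \<forall>d\<in>B. \<forall>e\<in>B. \<forall>f\<in>B.
       m a b = m c d \<longrightarrow> m c d = m e f \<longrightarrow> a \<in> p c d \<longrightarrow> c \<in> p e f \<longrightarrow> a \<in> p e f) \<and>
    \<comment> \<open>(v)\<close>
    (\<forall>a\<in>B. \<forall>b\<in>B. \<forall>c\<in>B. \<forall>d\<in>B.
       (\<exists>x\<in>B. \<exists>y\<in>B. \<exists>z\<in>B. m a x = m c y \<and> a = m x z \<and> c = m y z \<and>
           a \<in> p c y \<and> b \<in> p x z \<and> d \<in> p y z) \<longrightarrow>
       (\<exists>t\<in>B. \<exists>v\<in>B. \<exists>w\<in>B. m b t = m c v \<and> b = m t w \<and> c = m v w \<and>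
           b \<in> p c v \<and> a \<in> p t w \<and> d \<in> p v w)))"

text \<open>\<open>F \<mapsto> F-bullet\<close>: on morphisms it is restriction (the same function).\<close>
definition bullet :: "'a mring \<Rightarrow> 'a sgroup" where
  "bullet F = \<lparr> sg_carrier = mr_carrier F - {mr_zero F},
                sg_mult = mr_mult F,
                sg_one = mr_one F,
                sg_mone = mr_neg F (mr_one F),
                sg_equiv = (\<lambda>a b c d. a \<in> mr_carrier F - {mr_zero F} \<and> b \<in> mr_carrier F - {mr_zero F}
                     \<and> c \<in> mr_carrier F - {mr_zero F} \<and> d \<in> mr_carrier F - {mr_zero F}
                     \<and> mr_mult F a b = mr_mult F c d \<and> a \<in> mr_add F c d) \<rparr>"

text \<open>\<open>G \<mapsto> M(G)\<close> on the type \<open>'a option\<close>: \<open>None\<close> is the new zero, \<open>Some g\<close> represents \<open>g \<in> G\<close>.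
  On morphisms, \<open>M(f) = map_option f\<close>.\<close>
fun Mmult :: "'a sgroup \<Rightarrow> 'a option \<Rightarrow> 'a option \<Rightarrow> 'a option" where
  "Mmult G (Some a) (Some b) = Some (sg_mult G a b)"
| "Mmult G _ _ = None"

definition Mcarrier :: "'a sgroup \<Rightarrow> 'a option set" where
  "Mcarrier G = insert None (Some ` sg_carrier G)"

fun Madd :: "'a sgroup \<Rightarrow> 'a option \<Rightarrow> 'a option \<Rightarrow> 'a option set" where
  "Madd G None b = {b}"
| "Madd G (Some a) None = {Some a}"
| "Madd G (Some a) (Some b) =
     (if a = sg_neg G b then Mcarrier G else Some ` sg_D G a b)"

definition M :: "'a sgroup \<Rightarrow> 'a option mring" where
  "M G = \<lparr> mr_carrier = Mcarrier G,
           mr_add = Madd G,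
           mr_mult = Mmult G,
           mr_neg = map_option (sg_neg G),
           mr_zero = None,
           mr_one = Some (sg_one G) \<rparr>"

definition counit :: "'a mring \<Rightarrow> 'a option \<Rightarrow> 'a" where
  "counit F x = (case x of None \<Rightarrow> mr_zero F | Some a \<Rightarrow> a)"

end

theory Submission
  imports Defs
begin


locale eg =
  fixes S :: "'a set" and m :: "'a \<Rightarrow> 'a \<Rightarrow> 'a" and e :: 'a
  assumes cl[simp]: "a \<in> S \<Longrightarrow> b \<in> S \<Longrightarrow> m a b \<in> S"
    and e_in[simp]: "e \<in> S"
    and assoc[simp]: "a \<in> S \<Longrightarrow> b \<in> S \<Longrightarrow> c \<in> S \<Longrightarrow> m (m a b) c = m a (m b c)"
    and unl[simp]: "a \<in> S \<Longrightarrow> m e a = a"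
    and unr[simp]: "a \<in> S \<Longrightarrow> m a e = a"
    and sq[simp]: "a \<in> S \<Longrightarrow> m a a = e"
begin
lemma sq2[simp]: "a \<in> S \<Longrightarrow> b \<in> S \<Longrightarrow> m a (m a b) = b"
  by (metis assoc sq unl)
lemma comm: "a \<in> S \<Longrightarrow> b \<in> S \<Longrightarrow> m a b = m b a"
proof -
  assume a: "a \<in> S" and b: "b \<in> S"
  have 1: "m (m a b) (m b a) = e" using a b by (metis assoc cl sq sq2)
  have "m b a = m (m a b) (m (m a b) (m b a))" using a b by (simp only: sq2 cl)
  also have "\<dots> = m a b" using a b 1 by simp
  finally show ?thesis by simp
qed
lemma lcomm: "a \<in> S \<Longrightarrow> b \<in> S \<Longrightarrow> c \<in> S \<Longrightarrow> m a (m b c) = m b (m a c)"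
  by (metis assoc comm)
lemma sq3[simp]: "a \<in> S \<Longrightarrow> b \<in> S \<Longrightarrow> m b (m a b) = a"
  by (metis comm sq2)
lemmas ac = comm lcomm
end

locale psg = eg +
  fixes eq :: "'a \<Rightarrow> 'a \<Rightarrow> 'a \<Rightarrow> 'a \<Rightarrow> bool"
  assumes eq_in: "eq a b c d \<Longrightarrow> a \<in> S \<and> b \<in> S \<and> c \<in> S \<and> d \<in> S"
    and refl: "a \<in> S \<Longrightarrow> b \<in> S \<Longrightarrow> eq a b a b"
    and sym: "eq a b c d \<Longrightarrow> eq c d a b"
    and trans: "eq a b c d \<Longrightarrow> eq c d a' b' \<Longrightarrow> eq a b a' b'"
    and sg1: "a \<in> S \<Longrightarrow> b \<in> S \<Longrightarrow> eq a b b a"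
    and sg3: "eq a b c d \<Longrightarrow> m a b = m c d"
    and sg5: "g \<in> S \<Longrightarrow> eq a b c d \<Longrightarrow> eq (m g a) (m g b) (m g c) (m g d)"
begin

definition E3 where
  "E3 a1 a2 a3 b1 b2 b3 \<longleftrightarrow> (\<exists>x\<in>S. \<exists>y\<in>S. \<exists>z\<in>S. eq a1 x b1 y \<and> eq a2 a3 x z \<and> eq b2 b3 y z)"

lemma E3_in: "E3 a1 a2 a3 b1 b2 b3 \<Longrightarrow> a1 \<in> S \<and> a2 \<in> S \<and> a3 \<in> S \<and> b1 \<in> S \<and> b2 \<in> S \<and> b3 \<in> S"
  unfolding E3_def using eq_in by blast

lemma E3_prod: "E3 a1 a2 a3 b1 b2 b3 \<Longrightarrow> m a1 (m a2 a3) = m b1 (m b2 b3)"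
  unfolding E3_def
proof (elim bexE conjE)
  fix x y z assume h: "eq a1 x b1 y" "eq a2 a3 x z" "eq b2 b3 y z" "x \<in> S" "y \<in> S" "z \<in> S"
  have "m a1 (m a2 a3) = m (m a1 x) z" using h sg3[OF h(2)] eq_in[OF h(1)] by simp
  also have "\<dots> = m (m b1 y) z" using sg3[OF h(1)] by simp
  also have "\<dots> = m b1 (m b2 b3)" using h sg3[OF h(3)] eq_in[OF h(1)] by simp
  finally show ?thesis .
qed

lemma E3_scale: "g \<in> S \<Longrightarrow> E3 a1 a2 a3 b1 b2 b3 \<Longrightarrow> E3 (m g a1) (m g a2) (m g a3) (m g b1) (m g b2) (m g b3)"
  unfolding E3_def
  by (elim bexE conjE) (rule bexI[of _ "m g _"], rule bexI[of _ "m g _"], rule bexI[of _ "m g _"],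
      auto intro: sg5)

lemma E3_unscale: "g \<in> S \<Longrightarrow> E3 (m g a1) (m g a2) (m g a3) (m g b1) (m g b2) (m g b3) \<Longrightarrow>
   a1 \<in> S \<Longrightarrow> a2 \<in> S \<Longrightarrow> a3 \<in> S \<Longrightarrow> b1 \<in> S \<Longrightarrow> b2 \<in> S \<Longrightarrow> b3 \<in> S \<Longrightarrow> E3 a1 a2 a3 b1 b2 b3"
  using E3_scale[of g "m g a1" "m g a2" "m g a3" "m g b1" "m g b2" "m g b3"] by simp

lemma E3_pre23: "eq a2 a3 a2' a3' \<Longrightarrow> E3 a1 a2' a3' b1 b2 b3 \<Longrightarrow> E3 a1 a2 a3 b1 b2 b3"
  unfolding E3_def using trans by blast

lemma E3_swap12: "a1 \<in> S \<Longrightarrow> a2 \<in> S \<Longrightarrow> a3 \<in> S \<Longrightarrow> E3 a1 a2 a3 a2 a1 a3"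
  unfolding E3_def by (rule bexI[of _ a2], rule bexI[of _ a1], rule bexI[of _ a3]) (auto intro: sg1 refl)

lemma E3_refl: "a1 \<in> S \<Longrightarrow> a2 \<in> S \<Longrightarrow> a3 \<in> S \<Longrightarrow> E3 a1 a2 a3 a1 a2 a3"
  unfolding E3_def by (rule bexI[of _ a2], rule bexI[of _ a2], rule bexI[of _ a3]) (auto intro: refl)

lemma E3_swap13: "a1 \<in> S \<Longrightarrow> a2 \<in> S \<Longrightarrow> a3 \<in> S \<Longrightarrow> E3 a1 a2 a3 a3 a2 a1"
  unfolding E3_def by (rule bexI[of _ a3], rule bexI[of _ a1], rule bexI[of _ a2]) (auto intro: sg1)

lemma E3_trans_of_SW:
  assumes SW: "\<And>a b c d. a \<in> S \<Longrightarrow> b \<in> S \<Longrightarrow> c \<in> S \<Longrightarrow> d \<in> S \<Longrightarrow>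
      E3 a b (m b a) c d (m d c) \<Longrightarrow> E3 b a (m a b) c d (m d c)"
  assumes A: "E3 a1 a2 a3 b1 b2 b3" and B: "E3 b1 b2 b3 c1 c2 c3"
  shows "E3 a1 a2 a3 c1 c2 c3"
proof -
  have cin: "c1 \<in> S" "c2 \<in> S" "c3 \<in> S" using E3_in[OF B] by auto
  have P12: "E3 p1 p2 p3 c1 c2 c3" if h: "E3 p2 p1 p3 c1 c2 c3" for p1 p2 p3
  proof -
    have pin: "p1 \<in> S" "p2 \<in> S" "p3 \<in> S" using E3_in[OF h] by auto
    define g where "g = m p1 (m p2 p3)"
    have gin: "g \<in> S" using pin g_def by simp
    have pr: "m p2 (m p1 p3) = m c1 (m c2 c3)" using E3_prod[OF h] .
    have h2: "E3 (m g p2) (m g p1) (m g p3) (m g c1) (m g c2) (m g c3)" using E3_scale[OF gin h] .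
    have e1: "m g p3 = m (m g p1) (m g p2)" using pin unfolding g_def by (simp add: ac)
    have e2: "m g c3 = m (m g c2) (m g c1)" using pin cin pr unfolding g_def
      by (metis assoc cl sq2 comm lcomm unr sq)
    have e1': "m (m g p1) (m g p2) = m g p3" "m (m g p2) (m g p1) = m g p3"
      using e1 comm[of "m g p1" "m g p2"] pin gin by auto
    have e2': "m (m g c2) (m g c1) = m g c3" using e2 by simp
    have "E3 (m g p1) (m g p2) (m (m g p2) (m g p1)) (m g c1) (m g c2) (m (m g c2) (m g c1))"
      apply (rule SW) using h2 pin cin gin unfolding e1' e2' by auto
    hence "E3 (m g p1) (m g p2) (m g p3) (m g c1) (m g c2) (m g c3)"
      unfolding e1' e2' .
    thus ?thesis using E3_unscale[OF gin] pin cin by blast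
  qed
  have P23: "E3 p1 p2 p3 c1 c2 c3" if h: "E3 p1 p3 p2 c1 c2 c3" for p1 p2 p3
    using E3_pre23[OF _ h] E3_in[OF h] sg1 by blast
  have P12g: "E3 p1 p2 p3 c1 c2 c3" if h: "E3 q1 q2 p3 c1 c2 c3" and q: "eq p1 p2 q1 q2" for p1 p2 p3 q1 q2
  proof -
    have "E3 q1 p3 q2 c1 c2 c3" using P23 h by blast
    hence "E3 p3 q1 q2 c1 c2 c3" using P12 by blast
    hence "E3 p3 p1 p2 c1 c2 c3" using E3_pre23[OF q] by blast
    hence "E3 p1 p3 p2 c1 c2 c3" using P12 by blast
    thus ?thesis using P23 by blast
  qed
  from A obtain x y z where xyz: "x \<in> S" "y \<in> S" "z \<in> S" "eq a1 x b1 y" "eq a2 a3 x z" "eq b2 b3 y z"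
    unfolding E3_def by blast
  have "E3 b1 y z c1 c2 c3" using E3_pre23[OF sym[OF xyz(6)] B] .
  hence "E3 a1 x z c1 c2 c3" using P12g xyz by blast
  thus ?thesis using E3_pre23[OF xyz(5)] by blast
qed

lemma E3_SW_of_trans:
  assumes T: "\<And>a1 a2 a3 b1 b2 b3 c1 c2 c3. E3 a1 a2 a3 b1 b2 b3 \<Longrightarrow> E3 b1 b2 b3 c1 c2 c3 \<Longrightarrow> E3 a1 a2 a3 c1 c2 c3"
  assumes ab: "a \<in> S" "b \<in> S" and h: "E3 a b (m b a) c d (m d c)"
  shows "E3 b a (m a b) c d (m d c)"
proof -
  have "E3 b a (m a b) a b (m b a)" using E3_swap12 ab comm by simp
  thus ?thesis using T h by blast
qed

end

locale sgrp = psg +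
  fixes mo :: 'a
  assumes mo_in[simp]: "mo \<in> S"
    and sg2: "a \<in> S \<Longrightarrow> eq a (m mo a) e mo"
    and sg4: "eq a b c d \<Longrightarrow> eq a (m mo c) (m mo b) d"
    and T3: "E3 a1 a2 a3 b1 b2 b3 \<Longrightarrow> E3 b1 b2 b3 c1 c2 c3 \<Longrightarrow> E3 a1 a2 a3 c1 c2 c3"
begin

definition Dl where "Dl a b = {c\<in>S. \<exists>d\<in>S. eq c d a b}"

lemma Dl_sub: "Dl a b \<subseteq> S" unfolding Dl_def by auto

lemma D_neg: assumes a: "a \<in> S" shows "Dl a (m mo a) = S"
proof
  show "S \<subseteq> Dl a (m mo a)"
  proof
    fix c assume c: "c \<in> S"
    have "eq c (m mo c) a (m mo a)" using trans[OF sg2[OF c] sym[OF sg2[OF a]]] .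
    thus "c \<in> Dl a (m mo a)" unfolding Dl_def using c by auto
  qed
qed (rule Dl_sub)

lemma D_self: "a \<in> S \<Longrightarrow> b \<in> S \<Longrightarrow> a \<in> Dl a b"
  unfolding Dl_def using refl by auto

lemma sg1': "eq a b c d \<Longrightarrow> eq b a c d" using sg1 trans eq_in by blast
lemma sg1'': "eq a b c d \<Longrightarrow> eq a b d c" using sg1 trans eq_in sym by blast

lemma D_comm1: "c \<in> Dl a b \<Longrightarrow> c \<in> Dl b a"
  unfolding Dl_def using sg1'' by blast
lemma D_comm: "Dl a b = Dl b a"
  using D_comm1 by blast

lemma eq_iff: "a \<in> S \<Longrightarrow> b \<in> S \<Longrightarrow> c \<in> S \<Longrightarrow> d \<in> S \<Longrightarrow>
   eq a b c d \<longleftrightarrow> m a b = m c d \<and> a \<in> Dl c d"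
proof
  assume "eq a b c d" "b \<in> S" "a \<in> S" thus "m a b = m c d \<and> a \<in> Dl c d" using sg3 unfolding Dl_def by blast
next
  assume h: "m a b = m c d \<and> a \<in> Dl c d" "a \<in> S" "b \<in> S"
  then obtain d' where d': "d' \<in> S" "eq a d' c d" unfolding Dl_def by auto
  have "m a d' = m a b" using sg3[OF d'(2)] h by simp
  hence "m a (m a d') = m a (m a b)" by simp
  hence "d' = b" using h d' by (metis sq2)
  thus "eq a b c d" using d' by simp
qed

lemma D_scale: assumes g: "g \<in> S" and c: "c \<in> Dl a b" shows "m g c \<in> Dl (m g a) (m g b)"
proof -
  obtain d where d: "d \<in> S" "eq c d a b" using c unfolding Dl_def by auto
  have "eq (m g c) (m g d) (m g a) (m g b)" using sg5[OF g d(2)] .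
  thus ?thesis unfolding Dl_def using g d eq_in[OF d(2)] by auto
qed

lemma D_neg_lemma: assumes "a \<in> S" "b \<in> S" "c \<in> S" "m mo a \<in> Dl b c" shows "m mo c \<in> Dl b a"
proof -
  obtain f where f: "f \<in> S" "eq (m mo a) f b c" using assms unfolding Dl_def by auto
  have "eq (m mo a) (m mo b) (m mo f) c" using sg4[OF f(2)] .
  hence "eq c (m mo f) (m mo a) (m mo b)" using sym sg1' by blast
  hence "c \<in> Dl (m mo a) (m mo b)" unfolding Dl_def using f assms by auto
  hence "m mo c \<in> Dl (m mo (m mo a)) (m mo (m mo b))" using D_scale by simp
  thus ?thesis using assms D_comm by simp
qed

lemma D_rev: assumes "z \<in> Dl x y" "x \<in> S" "y \<in> S"
  shows "x \<in> Dl z (m mo y)" "y \<in> Dl (m mo x) z"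
proof -
  obtain f where f: "f \<in> S" "eq z f x y" using assms unfolding Dl_def by auto
  have 1: "eq x y f z" using sym[OF f(2)] sg1'' by blast
  have 2: "eq x (m mo f) z (m mo y)" using sg1''[OF sg4[OF 1]] .
  thus "x \<in> Dl z (m mo y)" using eq_in[OF 2] unfolding Dl_def by auto
  have 3: "eq y (m mo f) (m mo x) z" using sg4[OF sg1'[OF 1]] .
  thus "y \<in> Dl (m mo x) z" using eq_in[OF 3] unfolding Dl_def by auto
qed

lemma D3_iff: assumes "x \<in> S" "y \<in> S" "w \<in> S" "c \<in> S"
  shows "(\<exists>t\<in>Dl y w. c \<in> Dl x t) \<longleftrightarrow> (\<exists>u\<in>S. \<exists>v\<in>S. E3 x y w c u v)"
proof
  assume "\<exists>t\<in>Dl y w. c \<in> Dl x t"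
  then obtain t z s where h: "t \<in> S" "z \<in> S" "s \<in> S" "eq t z y w" "eq c s x t"
    unfolding Dl_def by auto
  have "E3 x y w c s z" unfolding E3_def
    apply (rule bexI[of _ t], rule bexI[of _ s], rule bexI[of _ z])
    using h sym refl by auto
  thus "\<exists>u\<in>S. \<exists>v\<in>S. E3 x y w c u v" using h by blast
next
  assume "\<exists>u\<in>S. \<exists>v\<in>S. E3 x y w c u v"
  then obtain u v X Y Z where h: "X \<in> S" "Y \<in> S" "Z \<in> S" "eq x X c Y" "eq y w X Z"
    unfolding E3_def by blast
  have "X \<in> Dl y w" unfolding Dl_def using h sym by blast
  moreover have "c \<in> Dl x X" unfolding Dl_def using h sym assms by blast
  ultimately show "\<exists>t\<in>Dl y w. c \<in> Dl x t" by blast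
qed

lemma D3_sym: assumes "x \<in> S" "y \<in> S" "w \<in> S" "c \<in> S"
  shows "(\<exists>t\<in>Dl y w. c \<in> Dl x t) \<longleftrightarrow> (\<exists>t\<in>Dl y x. c \<in> Dl w t)"
  unfolding D3_iff[OF assms] D3_iff[OF assms(3,2,1,4)]
proof (intro iffI; elim bexE)
  fix u v assume "u \<in> S" "v \<in> S" "E3 x y w c u v"
  thus "\<exists>u\<in>S. \<exists>v\<in>S. E3 w y x c u v" using T3[OF E3_swap13[OF assms(3,2,1)]] by blast
next
  fix u v assume "u \<in> S" "v \<in> S" "E3 w y x c u v"
  thus "\<exists>u\<in>S. \<exists>v\<in>S. E3 x y w c u v" using T3[OF E3_swap13[OF assms(1,2,3)]] by blast
qed

lemma SW: "a \<in> S \<Longrightarrow> b \<in> S \<Longrightarrow> E3 a b (m b a) c d (m d c) \<Longrightarrow> E3 b a (m a b) c d (m d c)"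
  using E3_SW_of_trans T3 by blast

end


lemma sgc: assumes "is_special_group G"
  shows "(\<forall>a\<in>sg_carrier G. \<forall>b\<in>sg_carrier G. sg_mult G a b \<in> sg_carrier G)"
   and "sg_one G \<in> sg_carrier G"
   and "(\<forall>a\<in>sg_carrier G. \<forall>b\<in>sg_carrier G. \<forall>c\<in>sg_carrier G. sg_mult G (sg_mult G a b) c = sg_mult G a (sg_mult G b c))"
   and "(\<forall>a\<in>sg_carrier G. sg_mult G (sg_one G) a = a \<and> sg_mult G a (sg_one G) = a)"
   and "(\<forall>a\<in>sg_carrier G. sg_mult G a a = sg_one G)"
   and "sg_mone G \<in> sg_carrier G"
   and "(\<forall>a b c d. sg_equiv G a b c d \<longrightarrow> a \<in> sg_carrier G \<and> b \<in> sg_carrier G \<and> c \<in> sg_carrier G \<and> d \<in> sg_carrier G)"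
   and "(\<forall>a\<in>sg_carrier G. \<forall>b\<in>sg_carrier G. sg_equiv G a b a b)"
   and "(\<forall>a b c d. sg_equiv G a b c d \<longrightarrow> sg_equiv G c d a b)"
   and "(\<forall>a b c d e' f. sg_equiv G a b c d \<longrightarrow> sg_equiv G c d e' f \<longrightarrow> sg_equiv G a b e' f)"
   and "(\<forall>a\<in>sg_carrier G. \<forall>b\<in>sg_carrier G. sg_equiv G a b b a)"
   and "(\<forall>a\<in>sg_carrier G. sg_equiv G a (sg_neg G a) (sg_one G) (sg_mone G))"
   and "(\<forall>a b c d. sg_equiv G a b c d \<longrightarrow> sg_mult G a b = sg_mult G c d)"
   and "(\<forall>a b c d. sg_equiv G a b c d \<longrightarrow> sg_equiv G a (sg_neg G c) (sg_neg G b) d)"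
   and "(\<forall>a b c d. \<forall>g\<in>sg_carrier G. sg_equiv G a b c d \<longrightarrow> sg_equiv G (sg_mult G g a) (sg_mult G g b) (sg_mult G g c) (sg_mult G g d))"
   and "\<forall>a1\<in>sg_carrier G. \<forall>a2\<in>sg_carrier G. \<forall>a3\<in>sg_carrier G. \<forall>b1\<in>sg_carrier G.
       \<forall>b2\<in>sg_carrier G. \<forall>b3\<in>sg_carrier G. \<forall>c1\<in>sg_carrier G. \<forall>c2\<in>sg_carrier G. \<forall>c3\<in>sg_carrier G.
       sg_equiv3 G a1 a2 a3 b1 b2 b3 \<longrightarrow> sg_equiv3 G b1 b2 b3 c1 c2 c3 \<longrightarrow> sg_equiv3 G a1 a2 a3 c1 c2 c3"
  by (insert assms, unfold is_special_group_def Let_def, elim conjE, assumption)+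

lemma sg_psg: assumes "is_special_group G"
  shows "psg (sg_carrier G) (sg_mult G) (sg_one G) (sg_equiv G)"
  apply unfold_locales
  apply (use sgc(1)[OF assms] in blast)
  apply (use sgc(2)[OF assms] in blast)
  apply (use sgc(3)[OF assms] in blast)
  apply (use sgc(4)[OF assms] in blast)
  apply (use sgc(4)[OF assms] in blast)
  apply (use sgc(5)[OF assms] in blast)
  apply (use sgc(7)[OF assms] in blast)
  apply (use sgc(8)[OF assms] in blast)
  apply (use sgc(9)[OF assms] in blast)
  apply (use sgc(10)[OF assms] in blast)
  apply (use sgc(11)[OF assms] in blast)
  apply (use sgc(13)[OF assms] in blast)
  apply (use sgc(15)[OF assms] in blast)
  done

lemma sg_E3: assumes "is_special_group G" shows "sg_equiv3 G = psg.E3 (sg_carrier G) (sg_equiv G)"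
  unfolding sg_equiv3_def psg.E3_def[OF sg_psg[OF assms]] by (intro ext) blast

lemma sg_mone_in: "is_special_group G \<Longrightarrow> sg_mone G \<in> sg_carrier G"
  using sgc(6) .
lemma sg_sg2a: "is_special_group G \<Longrightarrow> (\<forall>a\<in>sg_carrier G. sg_equiv G a (sg_neg G a) (sg_one G) (sg_mone G))"
  using sgc(12) .
lemma sg_sg4a: "is_special_group G \<Longrightarrow> (\<forall>a b c d. sg_equiv G a b c d \<longrightarrow> sg_equiv G a (sg_neg G c) (sg_neg G b) d)"
  using sgc(14) .
lemma sg_sg2: "is_special_group G \<Longrightarrow> a \<in> sg_carrier G \<Longrightarrow> sg_equiv G a (sg_mult G (sg_mone G) a) (sg_one G) (sg_mone G)"
  using sg_sg2a unfolding sg_neg_def by blast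
lemma sg_sg4: "is_special_group G \<Longrightarrow> sg_equiv G a b c d \<Longrightarrow> sg_equiv G a (sg_mult G (sg_mone G) c) (sg_mult G (sg_mone G) b) d"
  using sg_sg4a unfolding sg_neg_def by blast
lemma sg_interp: assumes "is_special_group G"
  shows "sgrp (sg_carrier G) (sg_mult G) (sg_one G) (sg_equiv G) (sg_mone G)"
proof -
  interpret psg "sg_carrier G" "sg_mult G" "sg_one G" "sg_equiv G" using sg_psg[OF assms] .
  show ?thesis
  proof (unfold_locales)
    show "sg_mone G \<in> sg_carrier G" using assms by (rule sg_mone_in)
    show "\<And>a. a \<in> sg_carrier G \<Longrightarrow> sg_equiv G a (sg_mult G (sg_mone G) a) (sg_one G) (sg_mone G)"
      using assms by (rule sg_sg2)
    show "\<And>a b c d. sg_equiv G a b c d \<Longrightarrow> sg_equiv G a (sg_mult G (sg_mone G) c) (sg_mult G (sg_mone G) b) d"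
      using assms by (rule sg_sg4)
    fix a1 a2 a3 b1 b2 b3 c1 c2 c3
    assume h: "E3 a1 a2 a3 b1 b2 b3" "E3 b1 b2 b3 c1 c2 c3"
    have T: "\<forall>a1\<in>sg_carrier G. \<forall>a2\<in>sg_carrier G. \<forall>a3\<in>sg_carrier G. \<forall>b1\<in>sg_carrier G.
       \<forall>b2\<in>sg_carrier G. \<forall>b3\<in>sg_carrier G. \<forall>c1\<in>sg_carrier G. \<forall>c2\<in>sg_carrier G. \<forall>c3\<in>sg_carrier G.
       E3 a1 a2 a3 b1 b2 b3 \<longrightarrow> E3 b1 b2 b3 c1 c2 c3 \<longrightarrow> E3 a1 a2 a3 c1 c2 c3"
      using sgc(16)[OF assms] unfolding sg_E3[OF assms] .
    show "E3 a1 a2 a3 c1 c2 c3" using T h E3_in[OF h(1)] E3_in[OF h(2)] by blast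
  qed
qed

lemma sg_D_eq: "is_special_group G \<Longrightarrow> sg_D G = sgrp.Dl (sg_carrier G) (sg_equiv G)"
  by (intro ext) (simp add: sg_D_def sgrp.Dl_def[OF sg_interp])


locale sgM =
  fixes G :: "'a sgroup"
  assumes G: "is_special_group G"

sublocale sgM \<subseteq> sgrp "sg_carrier G" "sg_mult G" "sg_one G" "sg_equiv G" "sg_mone G"
  by (rule sg_interp[OF G])

context sgM
begin

abbreviation "SS \<equiv> sg_carrier G"
abbreviation "nn \<equiv> sg_mult G (sg_mone G)"

lemma sgD[simp]: "sg_D G a b = Dl a b" using sg_D_eq[OF G] by simp
lemma sgneg[simp]: "sg_neg G a = nn a" by (simp add: sg_neg_def)

lemma nn_in[simp]: "a \<in> SS \<Longrightarrow> nn a \<in> SS" by simp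
lemma nnn[simp]: "a \<in> SS \<Longrightarrow> nn (nn a) = a" by simp
lemma nn_eq: "a \<in> SS \<Longrightarrow> b \<in> SS \<Longrightarrow> a = nn b \<longleftrightarrow> b = nn a" by auto

lemma Mcar: "x \<in> Mcarrier G \<longleftrightarrow> x = None \<or> (\<exists>a\<in>SS. x = Some a)"
  unfolding Mcarrier_def by auto

lemma Some_Mcar[simp]: "Some a \<in> Mcarrier G \<longleftrightarrow> a \<in> SS" unfolding Mcarrier_def by auto
lemma None_Mcar[simp]: "None \<in> Mcarrier G" unfolding Mcarrier_def by auto

lemma Madd_SS: "a \<in> SS \<Longrightarrow> b \<in> SS \<Longrightarrow>
   Madd G (Some a) (Some b) = (if a = nn b then Mcarrier G else Some ` Dl a b)"
  by (simp add: sgD sgneg)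

declare Madd.simps(3)[simp del]

lemma SomeIn: "a \<in> SS \<Longrightarrow> b \<in> SS \<Longrightarrow> Some c \<in> Madd G (Some a) (Some b) \<longleftrightarrow> c \<in> Dl a b"
  using Dl_sub D_neg[of b] D_comm by (auto simp: Madd_SS)

lemma NoneIn: "a \<in> SS \<Longrightarrow> b \<in> SS \<Longrightarrow> None \<in> Madd G (Some a) (Some b) \<longleftrightarrow> a = nn b"
  by (auto simp: Madd_SS)

lemma Madd_None1[simp]: "Madd G None y = {y}" by simp
lemma Madd_None2[simp]: "Madd G x None = {x}" by (cases x) auto

lemma Madd_sub: "x \<in> Mcarrier G \<Longrightarrow> y \<in> Mcarrier G \<Longrightarrow> Madd G x y \<subseteq> Mcarrier G"
  unfolding Mcar using Dl_sub by (auto simp: Madd_SS Mcarrier_def image_iff subset_iff split: if_splits)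

lemma Madd_ne: "x \<in> Mcarrier G \<Longrightarrow> y \<in> Mcarrier G \<Longrightarrow> Madd G x y \<noteq> {}"
  unfolding Mcar using D_self by (auto simp: Madd_SS Mcarrier_def split: if_splits; blast)

lemma Madd_comm: "x \<in> Mcarrier G \<Longrightarrow> y \<in> Mcarrier G \<Longrightarrow> Madd G x y = Madd G y x"
  unfolding Mcar using D_comm nn_eq by (auto simp: Madd_SS)

lemma Madd_rev: assumes "x \<in> Mcarrier G" "y \<in> Mcarrier G" "w \<in> Mcarrier G" "w \<in> Madd G x y"
  shows "x \<in> Madd G w (map_option nn y) \<and> y \<in> Madd G (map_option nn x) w"
proof -
  consider "x = None" | a where "x = Some a" "a \<in> SS" using assms(1) Mcar by blast
  thus ?thesis
  proof cases
    case 1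
    then have "w = y" using assms by simp
    thus ?thesis using 1 assms(2) unfolding Mcar by (auto simp: NoneIn)
  next
    case 2
    consider "y = None" | b where "y = Some b" "b \<in> SS" using assms(2) Mcar by blast
    thus ?thesis
    proof cases
      case 1 thus ?thesis using 2 assms by (auto simp: NoneIn)
    next
      case b: 2
      consider "w = None" | c where "w = Some c" "c \<in> SS" using assms(3) Mcar by blast
      thus ?thesis
      proof cases
        case 1 thus ?thesis using 2 b assms(4) by (auto simp: NoneIn)
      next
        case c: 2
        have "c \<in> Dl a b" using assms(4) 2 b c SomeIn by simp
        thus ?thesis using D_rev[of c a b] 2 b c SomeIn by simp
      qed
    qed
  qed
qed

lemma None_Madd_iff: "x \<in> Mcarrier G \<Longrightarrow> y \<in> Mcarrier G \<Longrightarrow> None \<in> Madd G x y \<longleftrightarrow> y = map_option nn x"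
  unfolding Mcar by (auto simp: NoneIn nn_eq)

lemma D3L: assumes "a \<in> SS" "b \<in> SS" "c \<in> SS"
  shows "nn a \<in> Dl b c \<longleftrightarrow> nn c \<in> Dl b a"
  using D_neg_lemma assms by blast

lemma U_char: assumes 4: "a \<in> SS" "b \<in> SS" "c \<in> SS"
  shows "z \<in> (\<Union>t\<in>Madd G (Some b) (Some c). Madd G (Some a) t) \<longleftrightarrow>
   (z = None \<and> nn a \<in> Dl b c) \<or> (\<exists>d\<in>SS. z = Some d \<and> (\<exists>t\<in>Dl b c. d \<in> Dl a t))"
proof
  assume "z \<in> (\<Union>t\<in>Madd G (Some b) (Some c). Madd G (Some a) t)"
  then obtain t where t: "t \<in> Madd G (Some b) (Some c)" "z \<in> Madd G (Some a) t" by blast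
  have tM: "t \<in> Mcarrier G" using t(1) Madd_sub[of "Some b" "Some c"] 4 by auto
  have zM: "z \<in> Mcarrier G" using t(2) Madd_sub[of "Some a" t] 4 tM by auto
  show "(z = None \<and> nn a \<in> Dl b c) \<or> (\<exists>d\<in>SS. z = Some d \<and> (\<exists>t\<in>Dl b c. d \<in> Dl a t))"
  proof (cases t)
    case None
    hence "z = Some a" "b = nn c" using t 4 NoneIn by auto
    thus ?thesis using 4 D_self[of a b] D_neg[of c] D_comm[of "nn c" c] by auto
  next
    case (Some t')
    have t'S: "t' \<in> SS" using tM Some by simp
    have t'D: "t' \<in> Dl b c" using t(1) Some 4 SomeIn t'S by simp
    show ?thesis
    proof (cases z)
      case None
      hence "a = nn t'" using t(2) Some 4 NoneIn t'S by simp
      thus ?thesis using None t'D 4 t'S by simp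
    next
      case (Some d)
      have dS: "d \<in> SS" using zM Some by simp
      have "d \<in> Dl a t'" using t(2) \<open>t = Some t'\<close> Some 4 SomeIn t'S dS by simp
      thus ?thesis using Some dS t'D by blast
    qed
  qed
next
  assume "(z = None \<and> nn a \<in> Dl b c) \<or> (\<exists>d\<in>SS. z = Some d \<and> (\<exists>t\<in>Dl b c. d \<in> Dl a t))"
  thus "z \<in> (\<Union>t\<in>Madd G (Some b) (Some c). Madd G (Some a) t)"
  proof
    assume h: "z = None \<and> nn a \<in> Dl b c"
    hence "Some (nn a) \<in> Madd G (Some b) (Some c)" using 4 SomeIn by simp
    moreover have "None \<in> Madd G (Some a) (Some (nn a))" using 4 NoneIn by simp
    ultimately show ?thesis using h by blast
  next
    assume "\<exists>d\<in>SS. z = Some d \<and> (\<exists>t\<in>Dl b c. d \<in> Dl a t)"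
    then obtain d t where h: "d \<in> SS" "z = Some d" "t \<in> Dl b c" "d \<in> Dl a t" by blast
    have tS: "t \<in> SS" using h Dl_sub by blast
    have "Some t \<in> Madd G (Some b) (Some c)" using 4 SomeIn h by simp
    moreover have "Some d \<in> Madd G (Some a) (Some t)" using 4 SomeIn h tS by simp
    ultimately show ?thesis using h by blast
  qed
qed

lemma Madd_assoc: assumes "x \<in> Mcarrier G" "y \<in> Mcarrier G" "w \<in> Mcarrier G"
  shows "(\<Union>t\<in>Madd G y w. Madd G x t) = (\<Union>t\<in>Madd G x y. Madd G t w)"
proof -
  consider "x = None" | "y = None" | "w = None" | a b c where "x = Some a" "y = Some b" "w = Some c"
    "a \<in> SS" "b \<in> SS" "c \<in> SS"
    using assms Mcar by blast
  thus ?thesis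
  proof cases
    case 1 thus ?thesis by simp
  next
    case 2 thus ?thesis by simp
  next
    case 3
    have "(\<Union>t\<in>Madd G x y. Madd G t None) = Madd G x y" by simp
    thus ?thesis using 3 by simp
  next
    case 4
    show ?thesis
    proof (rule set_eqI)
      fix z
      have L: "z \<in> (\<Union>t\<in>Madd G y w. Madd G x t) \<longleftrightarrow>
         (z = None \<and> nn a \<in> Dl b c) \<or> (\<exists>d\<in>SS. z = Some d \<and> (\<exists>t\<in>Dl b c. d \<in> Dl a t))"
        using U_char 4 by simp
      have R: "z \<in> (\<Union>t\<in>Madd G x y. Madd G t w) \<longleftrightarrow>
         (z = None \<and> nn c \<in> Dl b a) \<or> (\<exists>d\<in>SS. z = Some d \<and> (\<exists>t\<in>Dl b a. d \<in> Dl c t))"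
      proof -
        have "(\<Union>t\<in>Madd G x y. Madd G t w) = (\<Union>t\<in>Madd G y x. Madd G w t)"
        proof -
          have "Madd G x y = Madd G y x" using Madd_comm assms by blast
          moreover have "\<And>t. t \<in> Madd G y x \<Longrightarrow> Madd G t w = Madd G w t"
            using Madd_comm Madd_sub assms by blast
          ultimately show ?thesis by auto
        qed
        moreover
        have "z \<in> (\<Union>t\<in>Madd G y x. Madd G w t) \<longleftrightarrow>
         (z = None \<and> nn c \<in> Dl b a) \<or> (\<exists>d\<in>SS. z = Some d \<and> (\<exists>t\<in>Dl b a. d \<in> Dl c t))"
          using U_char[of c b a] 4 by simp
        ultimately show ?thesis by simp
      qed
      have "(nn a \<in> Dl b c) = (nn c \<in> Dl b a)" using D3L 4 by blast
      moreover have "\<And>d. d \<in> SS \<Longrightarrow> (\<exists>t\<in>Dl b c. d \<in> Dl a t) = (\<exists>t\<in>Dl b a. d \<in> Dl c t)"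
        using D3_sym 4 by blast
      ultimately show "z \<in> (\<Union>t\<in>Madd G y w. Madd G x t) \<longleftrightarrow> z \<in> (\<Union>t\<in>Madd G x y. Madd G t w)"
        unfolding L R by blast
    qed
  qed
qed


lemma Mmult_None2[simp]: "Mmult G x None = None" by (cases x) auto
lemma sgneg_fun: "sg_neg G = nn" by (rule ext) simp

lemma Madd_distrib: assumes "a \<in> Mcarrier G" "b \<in> Mcarrier G" "c \<in> Mcarrier G" "d \<in> Mcarrier G"
  "c \<in> Madd G a b" shows "Mmult G c d \<in> Madd G (Mmult G a d) (Mmult G b d)"
proof (cases d)
  case None thus ?thesis by simp
next
  case (Some g)
  have g: "g \<in> SS" using assms(4) Some by simp
  consider "a = None" | "b = None" | p q where "a = Some p" "b = Some q" "p \<in> SS" "q \<in> SS"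
    using assms(1,2) Mcar by blast
  thus ?thesis
  proof cases
    case 1 thus ?thesis using assms(5) by simp
  next
    case 2 thus ?thesis using assms(5) by simp
  next
    case 3
    show ?thesis
    proof (cases c)
      case None
      hence "p = nn q" using assms(5) 3 NoneIn by simp
      hence "sg_mult G g p = nn (sg_mult G g q)" using g 3 lcomm by simp
      thus ?thesis using None Some 3 g NoneIn by (simp add: comm[of p g] comm[of q g])
    next
      case (Some r)
      have r: "r \<in> SS" using assms(3) Some by simp
      have "r \<in> Dl p q" using assms(5) 3 Some SomeIn r by simp
      hence "sg_mult G g r \<in> Dl (sg_mult G g p) (sg_mult G g q)" using D_scale g by blast
      thus ?thesis using Some \<open>d = Some g\<close> 3 g r SomeIn by (simp add: comm)
    qed
  qed
qed

lemma Mmult_in: "x \<in> Mcarrier G \<Longrightarrow> y \<in> Mcarrier G \<Longrightarrow> Mmult G x y \<in> Mcarrier G"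
  unfolding Mcar by auto
lemma Mmult_assoc: "x \<in> Mcarrier G \<Longrightarrow> y \<in> Mcarrier G \<Longrightarrow> w \<in> Mcarrier G \<Longrightarrow>
  Mmult G (Mmult G x y) w = Mmult G x (Mmult G y w)"
  unfolding Mcar by auto
lemma Mmult_comm: "x \<in> Mcarrier G \<Longrightarrow> y \<in> Mcarrier G \<Longrightarrow> Mmult G x y = Mmult G y x"
  unfolding Mcar by (auto simp: comm)
lemma Mmult_one: "x \<in> Mcarrier G \<Longrightarrow> Mmult G (Some (sg_one G)) x = x"
  unfolding Mcar by auto

lemma Mneg_in: "x \<in> Mcarrier G \<Longrightarrow> map_option nn x \<in> Mcarrier G"
  unfolding Mcar by auto

lemma M_mr: "is_multiring (M G)"
  unfolding is_multiring_def Let_def M_def mring.simps sgneg_fun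
  apply (intro conjI)
  apply simp
  apply simp
  apply (simp add: Mneg_in)
  apply (simp add: Mmult_in)
  apply (simp add: Madd_sub Madd_ne)
  apply (simp add: Madd_rev)
  apply simp
  apply (simp add: Madd_assoc)
  apply (simp add: Madd_comm)
  apply (simp add: Mmult_assoc)
  apply (simp add: Mmult_comm)
  apply (simp add: Mmult_one)
  apply simp
  apply (simp add: Madd_distrib)
  done


lemma ballB: "Ball (Mcarrier G - {None}) P = (\<forall>a\<in>SS. P (Some a))"
  unfolding Mcarrier_def by auto
lemma bexB: "Bex (Mcarrier G - {None}) P = (\<exists>a\<in>SS. P (Some a))"
  unfolding Mcarrier_def by auto

lemma eqM: "a \<in> SS \<Longrightarrow> b \<in> SS \<Longrightarrow> c \<in> SS \<Longrightarrow> d \<in> SS \<Longrightarrow>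
  (sg_mult G a b = sg_mult G c d \<and> Some a \<in> Madd G (Some c) (Some d)) \<longleftrightarrow> sg_equiv G a b c d"
  using eq_iff SomeIn by simp

lemma inv: "a \<in> SS \<Longrightarrow> \<exists>b\<in>Mcarrier G. Mmult G (Some a) b = Some (sg_one G)"
  by (intro bexI[of _ "Some a"]) auto

lemma vM: assumes S4: "a \<in> SS" "b \<in> SS" "c \<in> SS" "d \<in> SS"
  and H: "(\<exists>x\<in>SS. \<exists>y\<in>SS. sg_mult G a x = sg_mult G c y \<and>
      (\<exists>z\<in>SS. a = sg_mult G x z \<and> c = sg_mult G y z \<and>
          Some a \<in> Madd G (Some c) (Some y) \<and> Some b \<in> Madd G (Some x) (Some z) \<and>
          Some d \<in> Madd G (Some y) (Some z)))"
  shows "(\<exists>x\<in>SS. \<exists>y\<in>SS. sg_mult G b x = sg_mult G c y \<and>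
      (\<exists>z\<in>SS. b = sg_mult G x z \<and> c = sg_mult G y z \<and>
          Some b \<in> Madd G (Some c) (Some y) \<and> Some a \<in> Madd G (Some x) (Some z) \<and>
          Some d \<in> Madd G (Some y) (Some z)))"
proof -
  obtain x y z where h: "x \<in> SS" "y \<in> SS" "z \<in> SS" "sg_mult G a x = sg_mult G c y"
    "a = sg_mult G x z" "c = sg_mult G y z" "Some a \<in> Madd G (Some c) (Some y)"
    "Some b \<in> Madd G (Some x) (Some z)" "Some d \<in> Madd G (Some y) (Some z)" using H by blast
  have 1: "sg_equiv G a x c y" using eqM[of a x c y] h S4 by simp
  have 2: "sg_equiv G b (sg_mult G b a) x z" using eqM[of b "sg_mult G b a" x z] h S4 by simp
  have 3: "sg_equiv G d (sg_mult G d c) y z" using eqM[of d "sg_mult G d c" y z] h S4 by simp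
  have "E3 a b (sg_mult G b a) c d (sg_mult G d c)" unfolding E3_def using 1 2 3 h by blast
  hence "E3 b a (sg_mult G a b) c d (sg_mult G d c)" using SW S4 by blast
  then obtain t v w where g: "t \<in> SS" "v \<in> SS" "w \<in> SS" "sg_equiv G b t c v"
    "sg_equiv G a (sg_mult G a b) t w" "sg_equiv G d (sg_mult G d c) v w" unfolding E3_def by blast
  have e1: "sg_mult G b t = sg_mult G c v" using sg3[OF g(4)] .
  have e2: "b = sg_mult G t w" using sg3[OF g(5)] S4 by simp
  have e3: "c = sg_mult G v w" using sg3[OF g(6)] S4 by simp
  have m1: "Some b \<in> Madd G (Some c) (Some v)" using eqM[of b t c v] g S4 by simp
  have m2: "Some a \<in> Madd G (Some t) (Some w)" using eqM[of a "sg_mult G a b" t w] g S4 by simp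
  have m3: "Some d \<in> Madd G (Some v) (Some w)" using eqM[of d "sg_mult G d c" v w] g S4 by simp
  show ?thesis using g e1 e2 e3 m1 m2 m3 by blast
qed

lemma M_smf: "is_special_multifield (M G)"
  unfolding is_special_multifield_def is_multifield_def Let_def
  apply (intro conjI)
  apply (rule M_mr)
  apply (simp add: M_def)
  apply (simp add: M_def ballB inv) 
  apply (simp add: M_def ballB)
  apply (simp add: M_def ballB Madd_SS)
  apply (simp add: M_def ballB)
  apply (intro ballI impI)
  apply (metis eqM sym)
  apply (simp add: M_def ballB)
  apply (intro ballI impI)
  apply (metis eqM trans)
  apply (simp add: M_def ballB bexB)
  apply (intro ballI impI)
  apply (rule vM; assumption)
  done

end


lemma part1: "is_special_group G \<Longrightarrow> is_special_multifield (M G)"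
  by (rule sgM.M_smf) (unfold_locales)

lemma part2: assumes G: "is_special_group G" and H: "is_special_group H" and f: "sg_morphism G H f"
  shows "mr_morphism (M G) (M H) (map_option f)"
proof -
  interpret g: sgM G by unfold_locales (rule G)
  interpret h: sgM H by unfold_locales (rule H)
  have fS: "\<And>a. a \<in> sg_carrier G \<Longrightarrow> f a \<in> sg_carrier H" using f unfolding sg_morphism_def by blast
  have fm: "\<And>a b. a \<in> sg_carrier G \<Longrightarrow> b \<in> sg_carrier G \<Longrightarrow> f (sg_mult G a b) = sg_mult H (f a) (f b)"
    using f unfolding sg_morphism_def by blast
  have fmo: "f (sg_mone G) = sg_mone H" using f unfolding sg_morphism_def by blast
  have feq: "\<And>a b c d. sg_equiv G a b c d \<Longrightarrow> sg_equiv H (f a) (f b) (f c) (f d)"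
    using f unfolding sg_morphism_def by blast
  have fone: "f (sg_one G) = sg_one H"
  proof -
    have "f (sg_one G) = sg_mult H (f (sg_one G)) (f (sg_one G))" using fm[of "sg_one G" "sg_one G"] by simp
    thus ?thesis using fS[of "sg_one G"] by simp
  qed
  have fneg: "\<And>a. a \<in> sg_carrier G \<Longrightarrow> f (sg_mult G (sg_mone G) a) = sg_mult H (sg_mone H) (f a)"
    using fm fmo by simp
  have add: "map_option f c \<in> Madd H (map_option f a) (map_option f b)"
    if a: "a \<in> Mcarrier G" and b: "b \<in> Mcarrier G" and c: "c \<in> Mcarrier G" and cab: "c \<in> Madd G a b" for a b c
  proof -
    consider "a = None" | "b = None" | p q where "a = Some p" "b = Some q" "p \<in> sg_carrier G" "q \<in> sg_carrier G"
      using a b g.Mcar by blast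
    thus ?thesis
    proof cases
      case 1 thus ?thesis using cab by simp
    next
      case 2 thus ?thesis using cab by simp
    next
      case 3
      show ?thesis
      proof (cases c)
        case None
        hence "p = sg_mult G (sg_mone G) q" using cab 3 g.NoneIn by simp
        hence "f p = sg_mult H (sg_mone H) (f q)" using fneg 3 by simp
        thus ?thesis using None 3 fS h.NoneIn by simp
      next
        case (Some r)
        have r: "r \<in> sg_carrier G" using c Some by simp
        have "r \<in> g.Dl p q" using cab 3 Some g.SomeIn r by simp
        then obtain d where "sg_equiv G r d p q" unfolding g.Dl_def by blast
        hence e: "sg_equiv H (f r) (f d) (f p) (f q)" by (rule feq)
        hence "f r \<in> h.Dl (f p) (f q)" unfolding h.Dl_def using h.eq_in[OF e] by blast
        thus ?thesis using Some 3 fS r h.SomeIn by simp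
      qed
    qed
  qed
  show ?thesis unfolding mr_morphism_def M_def mring.simps
    apply (intro conjI)
    subgoal using fS g.Mcar h.Mcar by fastforce
    subgoal using add by blast
    subgoal using fneg g.Mcar by auto
    subgoal by simp
    subgoal using fm g.Mcar by auto
    subgoal using fone by simp
    done
qed

lemma part5: assumes G: "is_special_group G" shows "sg_iso G (bullet (M G)) Some"
proof -
  interpret g: sgM G by unfold_locales (rule G)
  have B: "sg_carrier (bullet (M G)) = Some ` sg_carrier G"
    by (auto simp: bullet_def M_def Mcarrier_def)
  have m1: "sg_morphism G (bullet (M G)) Some"
    unfolding sg_morphism_def
  proof (intro conjI allI impI ballI)
    show "Some a \<in> sg_carrier (bullet (M G))" if "a \<in> sg_carrier G" for a using that B by auto
    show "Some (sg_mult G a b) = sg_mult (bullet (M G)) (Some a) (Some b)" for a b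
      by (simp add: bullet_def M_def)
    show "Some (sg_mone G) = sg_mone (bullet (M G))" by (simp add: bullet_def M_def)
    show "sg_equiv (bullet (M G)) (Some a) (Some b) (Some c) (Some d)" if e: "sg_equiv G a b c d" for a b c d
    proof -
      have in4: "a \<in> sg_carrier G" "b \<in> sg_carrier G" "c \<in> sg_carrier G" "d \<in> sg_carrier G"
        using g.eq_in[OF e] by auto
      have "sg_mult G a b = sg_mult G c d \<and> Some a \<in> Madd G (Some c) (Some d)"
        using g.eqM[OF in4] e by simp
      thus ?thesis using in4 by (simp add: bullet_def M_def)
    qed
  qed
  have m2: "sg_morphism (bullet (M G)) G the"
    unfolding sg_morphism_def
  proof (intro conjI allI impI ballI)
    show "the a \<in> sg_carrier G" if "a \<in> sg_carrier (bullet (M G))" for a using that B by auto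
    show "the (sg_mult (bullet (M G)) a b) = sg_mult G (the a) (the b)"
      if "a \<in> sg_carrier (bullet (M G))" "b \<in> sg_carrier (bullet (M G))" for a b
      using that B by (auto simp: bullet_def M_def)
    show "the (sg_mone (bullet (M G))) = sg_mone G" by (simp add: bullet_def M_def)
    show "sg_equiv G (the a) (the b) (the c) (the d)" if e: "sg_equiv (bullet (M G)) a b c d" for a b c d
    proof -
      from e obtain a' b' c' d' where s: "a = Some a'" "b = Some b'" "c = Some c'" "d = Some d'"
        and in4: "a' \<in> sg_carrier G" "b' \<in> sg_carrier G" "c' \<in> sg_carrier G" "d' \<in> sg_carrier G"
        by (auto simp: bullet_def M_def Mcarrier_def)
      have "sg_mult G a' b' = sg_mult G c' d' \<and> Some a' \<in> Madd G (Some c') (Some d')"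
        using e s by (simp add: bullet_def M_def)
      thus ?thesis using g.eqM[OF in4] s by simp
    qed
  qed
  show ?thesis unfolding sg_iso_def using m1 m2 B by auto
qed


lemma sgrp_sg: assumes "sgrp (sg_carrier G) (sg_mult G) (sg_one G) (sg_equiv G) (sg_mone G)"
  shows "is_special_group G"
proof -
  interpret sgrp "sg_carrier G" "sg_mult G" "sg_one G" "sg_equiv G" "sg_mone G" by (rule assms)
  have E: "sg_equiv3 G = E3" unfolding sg_equiv3_def E3_def by (intro ext) blast
  show ?thesis unfolding is_special_group_def Let_def sg_neg_def E
    apply (intro conjI)
    subgoal by simp
    subgoal by simp
    subgoal by simp
    subgoal by simp
    subgoal by simp
    subgoal by simp
    subgoal using eq_in by blast
    subgoal using refl by blast
    subgoal using sym by blast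
    subgoal using trans by blast
    subgoal using sg1 by blast
    subgoal using sg2 by blast
    subgoal using sg3 by blast
    subgoal using sg4 by blast
    subgoal using sg5 by blast
    subgoal using T3 by blast
    done
qed

lemma smfc: assumes "is_special_multifield F"
  shows "mr_zero F \<in> mr_carrier F"
   and "mr_one F \<in> mr_carrier F"
   and "(\<forall>x\<in>mr_carrier F. mr_neg F x \<in> mr_carrier F)"
   and "(\<forall>x\<in>mr_carrier F. \<forall>y\<in>mr_carrier F. mr_mult F x y \<in> mr_carrier F)"
   and "(\<forall>x\<in>mr_carrier F. \<forall>y\<in>mr_carrier F. mr_add F x y \<subseteq> mr_carrier F \<and> mr_add F x y \<noteq> {})"
   and "(\<forall>x\<in>mr_carrier F. \<forall>y\<in>mr_carrier F. \<forall>w\<in>mr_carrier F. w \<in> mr_add F x y \<longrightarrow> x \<in> mr_add F w (mr_neg F y) \<and> y \<in> mr_add F (mr_neg F x) w)"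
   and "(\<forall>x\<in>mr_carrier F. \<forall>y\<in>mr_carrier F. y \<in> mr_add F (mr_zero F) x \<longleftrightarrow> y = x)"
   and "(\<forall>x\<in>mr_carrier F. \<forall>y\<in>mr_carrier F. \<forall>w\<in>mr_carrier F. (\<Union>t\<in>mr_add F y w. mr_add F x t) = (\<Union>t\<in>mr_add F x y. mr_add F t w))"
   and "(\<forall>x\<in>mr_carrier F. \<forall>y\<in>mr_carrier F. mr_add F x y = mr_add F y x)"
   and "(\<forall>x\<in>mr_carrier F. \<forall>y\<in>mr_carrier F. \<forall>w\<in>mr_carrier F. mr_mult F (mr_mult F x y) w = mr_mult F x (mr_mult F y w))"
   and "(\<forall>x\<in>mr_carrier F. \<forall>y\<in>mr_carrier F. mr_mult F x y = mr_mult F y x)"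
   and "(\<forall>x\<in>mr_carrier F. mr_mult F (mr_one F) x = x)"
   and "(\<forall>x\<in>mr_carrier F. mr_mult F x (mr_zero F) = mr_zero F)"
   and "(\<forall>a\<in>mr_carrier F. \<forall>b\<in>mr_carrier F. \<forall>c\<in>mr_carrier F. \<forall>d\<in>mr_carrier F. c \<in> mr_add F a b \<longrightarrow> mr_mult F c d \<in> mr_add F (mr_mult F a d) (mr_mult F b d))"
   and "mr_one F \<noteq> mr_zero F"
   and "(\<forall>a\<in>mr_carrier F - {mr_zero F}. mr_mult F a a = mr_one F)"
   and "(\<forall>a\<in>mr_carrier F - {mr_zero F}. mr_add F a (mr_neg F a) = mr_carrier F)"
   and "(\<forall>a\<in>mr_carrier F - {mr_zero F}. \<forall>b\<in>mr_carrier F - {mr_zero F}. \<forall>c\<in>mr_carrier F - {mr_zero F}. \<forall>d\<in>mr_carrier F - {mr_zero F}. mr_mult F a b = mr_mult F c d \<longrightarrow> a \<in> mr_add F c d \<longrightarrow> c \<in> mr_add F a b)"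
   and "(\<forall>a\<in>mr_carrier F - {mr_zero F}. \<forall>b\<in>mr_carrier F - {mr_zero F}. \<forall>c\<in>mr_carrier F - {mr_zero F}. \<forall>d\<in>mr_carrier F - {mr_zero F}. \<forall>e\<in>mr_carrier F - {mr_zero F}. \<forall>f\<in>mr_carrier F - {mr_zero F}.
       mr_mult F a b = mr_mult F c d \<longrightarrow> mr_mult F c d = mr_mult F e f \<longrightarrow> a \<in> mr_add F c d \<longrightarrow> c \<in> mr_add F e f \<longrightarrow> a \<in> mr_add F e f)"
   and "(\<forall>a\<in>mr_carrier F - {mr_zero F}. \<forall>b\<in>mr_carrier F - {mr_zero F}. \<forall>c\<in>mr_carrier F - {mr_zero F}. \<forall>d\<in>mr_carrier F - {mr_zero F}.
       (\<exists>x\<in>mr_carrier F - {mr_zero F}. \<exists>y\<in>mr_carrier F - {mr_zero F}. \<exists>z\<in>mr_carrier F - {mr_zero F}. mr_mult F a x = mr_mult F c y \<and> a = mr_mult F x z \<and> c = mr_mult F y z \<and>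
           a \<in> mr_add F c y \<and> b \<in> mr_add F x z \<and> d \<in> mr_add F y z) \<longrightarrow>
       (\<exists>t\<in>mr_carrier F - {mr_zero F}. \<exists>v\<in>mr_carrier F - {mr_zero F}. \<exists>w\<in>mr_carrier F - {mr_zero F}. mr_mult F b t = mr_mult F c v \<and> b = mr_mult F t w \<and> c = mr_mult F v w \<and>
           b \<in> mr_add F c v \<and> a \<in> mr_add F t w \<and> d \<in> mr_add F v w))"
  by (insert assms, unfold is_special_multifield_def is_multifield_def is_multiring_def Let_def, elim conjE, assumption)+




locale smf =
  fixes F :: "'c mring"
  assumes F: "is_special_multifield F"
begin

abbreviation "R \<equiv> mr_carrier F"
abbreviation "pp \<equiv> mr_add F"
abbreviation "mm \<equiv> mr_mult F"
abbreviation "nm \<equiv> mr_neg F"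
abbreviation "zz \<equiv> mr_zero F"
abbreviation "oo \<equiv> mr_one F"
abbreviation "BB \<equiv> mr_carrier F - {mr_zero F}"

lemma z_in[simp]: "zz \<in> R" using smfc(1)[OF F] .
lemma o_in[simp]: "oo \<in> R" using smfc(2)[OF F] .
lemma n_in[simp]: "x \<in> R \<Longrightarrow> nm x \<in> R" using smfc(3)[OF F] by blast
lemma m_in[simp]: "x \<in> R \<Longrightarrow> y \<in> R \<Longrightarrow> mm x y \<in> R" using smfc(4)[OF F] by blast
lemma p_sub: "x \<in> R \<Longrightarrow> y \<in> R \<Longrightarrow> pp x y \<subseteq> R" using smfc(5)[OF F] by blast
lemma p_ne: "x \<in> R \<Longrightarrow> y \<in> R \<Longrightarrow> pp x y \<noteq> {}" using smfc(5)[OF F] by blast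
lemma rev1: "x \<in> R \<Longrightarrow> y \<in> R \<Longrightarrow> w \<in> R \<Longrightarrow> w \<in> pp x y \<Longrightarrow> x \<in> pp w (nm y)"
  using smfc(6)[OF F] by blast
lemma rev2: "x \<in> R \<Longrightarrow> y \<in> R \<Longrightarrow> w \<in> R \<Longrightarrow> w \<in> pp x y \<Longrightarrow> y \<in> pp (nm x) w"
  using smfc(6)[OF F] by blast
lemma zadd: "x \<in> R \<Longrightarrow> y \<in> R \<Longrightarrow> y \<in> pp zz x \<longleftrightarrow> y = x" using smfc(7)[OF F] by blast
lemma p_comm: "x \<in> R \<Longrightarrow> y \<in> R \<Longrightarrow> pp x y = pp y x" using smfc(9)[OF F] by blast
lemma m_assoc[simp]: "x \<in> R \<Longrightarrow> y \<in> R \<Longrightarrow> w \<in> R \<Longrightarrow> mm (mm x y) w = mm x (mm y w)"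
  using smfc(10)[OF F] by blast
lemma m_comm: "x \<in> R \<Longrightarrow> y \<in> R \<Longrightarrow> mm x y = mm y x" using smfc(11)[OF F] by blast
lemma m_one[simp]: "x \<in> R \<Longrightarrow> mm oo x = x" using smfc(12)[OF F] by blast
lemma m_zero[simp]: "x \<in> R \<Longrightarrow> mm x zz = zz" using smfc(13)[OF F] by blast
lemma distrib: "a \<in> R \<Longrightarrow> b \<in> R \<Longrightarrow> c \<in> R \<Longrightarrow> d \<in> R \<Longrightarrow> c \<in> pp a b \<Longrightarrow> mm c d \<in> pp (mm a d) (mm b d)"
  using smfc(14)[OF F] by blast
lemma o_ne_z[simp]: "oo \<noteq> zz" using smfc(15)[OF F] .
lemma sq_i[simp]: "a \<in> R \<Longrightarrow> a \<noteq> zz \<Longrightarrow> mm a a = oo" using smfc(16)[OF F] by blast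
lemma ii: "a \<in> R \<Longrightarrow> a \<noteq> zz \<Longrightarrow> pp a (nm a) = R" using smfc(17)[OF F] by blast
lemma iii: "a \<in> BB \<Longrightarrow> b \<in> BB \<Longrightarrow> c \<in> BB \<Longrightarrow> d \<in> BB \<Longrightarrow> mm a b = mm c d \<Longrightarrow> a \<in> pp c d \<Longrightarrow> c \<in> pp a b"
  using smfc(18)[OF F] by blast
lemma iv: "a \<in> BB \<Longrightarrow> b \<in> BB \<Longrightarrow> c \<in> BB \<Longrightarrow> d \<in> BB \<Longrightarrow> e \<in> BB \<Longrightarrow> f \<in> BB \<Longrightarrow>
   mm a b = mm c d \<Longrightarrow> mm c d = mm e f \<Longrightarrow> a \<in> pp c d \<Longrightarrow> c \<in> pp e f \<Longrightarrow> a \<in> pp e f"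
  using smfc(19)[OF F] by blast
lemma v: "a \<in> BB \<Longrightarrow> b \<in> BB \<Longrightarrow> c \<in> BB \<Longrightarrow> d \<in> BB \<Longrightarrow>
       (\<exists>x\<in>BB. \<exists>y\<in>BB. \<exists>z\<in>BB. mm a x = mm c y \<and> a = mm x z \<and> c = mm y z \<and>
           a \<in> pp c y \<and> b \<in> pp x z \<and> d \<in> pp y z) \<Longrightarrow>
       (\<exists>t\<in>BB. \<exists>v\<in>BB. \<exists>w\<in>BB. mm b t = mm c v \<and> b = mm t w \<and> c = mm v w \<and>
           b \<in> pp c v \<and> a \<in> pp t w \<and> d \<in> pp v w)"
  using smfc(20)[OF F] by blast

lemma zm[simp]: "x \<in> R \<Longrightarrow> mm zz x = zz" using m_comm m_zero by (metis z_in)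
lemma add0: "x \<in> R \<Longrightarrow> pp zz x = {x}" using zadd p_sub[of zz x] by auto
lemma add0': "x \<in> R \<Longrightarrow> pp x zz = {x}" using add0 p_comm by auto
lemma zero_in: "x \<in> R \<Longrightarrow> zz \<in> pp x (nm x)"
  using rev1[of zz x x] add0 by auto
lemma uniq: "x \<in> R \<Longrightarrow> y \<in> R \<Longrightarrow> zz \<in> pp x y \<Longrightarrow> y = nm x"
  using rev2[of x y zz] add0' by auto
lemma nn[simp]: "x \<in> R \<Longrightarrow> nm (nm x) = x"
  using uniq[of "nm x" x] zero_in[of x] p_comm by auto
lemma mneg: "x \<in> R \<Longrightarrow> mm (nm oo) x = nm x"
proof -
  assume x: "x \<in> R"
  have "mm zz x \<in> pp (mm oo x) (mm (nm oo) x)" using distrib[of oo "nm oo" zz x] zero_in[of oo] x by simp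
  hence "zz \<in> pp x (mm (nm oo) x)" using x by simp
  thus ?thesis using uniq x by simp
qed
lemma nz[simp]: "nm zz = zz" using zero_in[of zz] add0 by auto
lemma n_ne: "x \<in> R \<Longrightarrow> x \<noteq> zz \<Longrightarrow> nm x \<noteq> zz" using nn nz by metis
lemma mB: "a \<in> BB \<Longrightarrow> b \<in> BB \<Longrightarrow> mm a b \<in> BB"
proof -
  assume a: "a \<in> BB" and b: "b \<in> BB"
  have "mm a (mm a b) = b" using a b by (simp flip: m_assoc)
  thus ?thesis using a b by auto
qed

sublocale Beg: eg BB mm oo
  apply unfold_locales
  apply (rule mB; assumption)
  apply simp
  apply simp
  apply simp
  apply (metis DiffD1 m_comm m_one o_in)
  apply simp
  done


abbreviation "eqb \<equiv> sg_equiv (bullet F)"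
lemma eqb_iff: "eqb a b c d \<longleftrightarrow> a \<in> BB \<and> b \<in> BB \<and> c \<in> BB \<and> d \<in> BB \<and> mm a b = mm c d \<and> a \<in> pp c d"
  by (simp add: bullet_def)

lemma arith1: "a \<in> BB \<Longrightarrow> b \<in> BB \<Longrightarrow> c \<in> BB \<Longrightarrow> d \<in> BB \<Longrightarrow> mm a b = mm c d \<Longrightarrow> mm b d = mm a c"
proof -
  assume h: "a \<in> BB" "b \<in> BB" "c \<in> BB" "d \<in> BB" "mm a b = mm c d"
  have "d = mm c (mm c d)" using h by simp
  also have "\<dots> = mm c (mm a b)" using h by simp
  finally have "mm b d = mm b (mm c (mm a b))" by simp
  also have "\<dots> = mm c (mm b (mm a b))" using h mB by (intro Beg.lcomm) auto
  also have "\<dots> = mm c a" using h(1,2) Beg.sq3[of a b] by simp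
  also have "\<dots> = mm a c" using h(1,3) Beg.comm by simp
  finally show ?thesis .
qed

lemma self_in: assumes a: "a \<in> BB" and b: "b \<in> BB" shows "a \<in> pp a b"
proof (cases "zz \<in> pp a b")
  case True
  hence "b = nm a" using uniq a b by simp
  thus ?thesis using ii a by simp
next
  case False
  obtain t where t: "t \<in> pp a b" using p_ne[of a b] a b by auto
  have tB: "t \<in> BB" using t False p_sub[of a b] a b by auto
  define s where "s = mm t (mm a b)"
  have sB: "s \<in> BB" unfolding s_def using mB[OF tB mB[OF a b]] .
  have ts: "mm t s = mm a b" unfolding s_def using Beg.sq2[OF tB mB[OF a b]] .
  have "a \<in> pp t s" using iii[OF tB sB a b ts t] .
  thus ?thesis using iv[OF a b tB sB a b ts[symmetric] ts _ t] by simp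
qed

sublocale Bpsg: psg BB mm oo eqb
proof unfold_locales
  show "eqb a b c d \<Longrightarrow> a \<in> BB \<and> b \<in> BB \<and> c \<in> BB \<and> d \<in> BB" for a b c d
    by (simp add: eqb_iff)
  show "a \<in> BB \<Longrightarrow> b \<in> BB \<Longrightarrow> eqb a b a b" for a b
    using self_in by (simp add: eqb_iff)
  show "eqb c d a b" if e: "eqb a b c d" for a b c d
  proof -
    have h: "a \<in> BB" "b \<in> BB" "c \<in> BB" "d \<in> BB" "mm a b = mm c d" "a \<in> pp c d"
      using e by (auto simp: eqb_iff)
    have "c \<in> pp a b" by (rule iii[OF h])
    thus ?thesis using h by (simp add: eqb_iff)
  qed
  show "eqb a b a' b'" if e: "eqb a b c d" and e2: "eqb c d a' b'" for a b c d a' b'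
  proof -
    have h: "a \<in> BB" "b \<in> BB" "c \<in> BB" "d \<in> BB" "mm a b = mm c d" "a \<in> pp c d"
      using e by (auto simp: eqb_iff)
    have h2: "a' \<in> BB" "b' \<in> BB" "mm c d = mm a' b'" "c \<in> pp a' b'"
      using e2 by (auto simp: eqb_iff)
    have "a \<in> pp a' b'" by (rule iv[OF h(1-4) h2(1,2) h(5) h2(3) h(6) h2(4)])
    thus ?thesis using h h2 by (simp add: eqb_iff)
  qed
  show "a \<in> BB \<Longrightarrow> b \<in> BB \<Longrightarrow> eqb a b b a" for a b
    using self_in p_comm Beg.comm by (simp add: eqb_iff)
  show "eqb a b c d \<Longrightarrow> mm a b = mm c d" for a b c d by (simp add: eqb_iff)
  show "g \<in> BB \<Longrightarrow> eqb a b c d \<Longrightarrow> eqb (mm g a) (mm g b) (mm g c) (mm g d)" for g a b c d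
  proof -
    assume g: "g \<in> BB" and e: "eqb a b c d"
    hence h: "a \<in> BB" "b \<in> BB" "c \<in> BB" "d \<in> BB" "mm a b = mm c d" "a \<in> pp c d"
      by (auto simp: eqb_iff)
    have gg: "mm (mm g x) (mm g y) = mm x y" if "x \<in> BB" "y \<in> BB" for x y
    proof -
      have "mm (mm g x) (mm g y) = mm g (mm x (mm g y))" using that g mB by (intro Beg.assoc) auto
      also have "\<dots> = mm g (mm g (mm x y))" using that g Beg.lcomm by simp
      also have "\<dots> = mm x y" using that g mB Beg.sq2 by simp
      finally show ?thesis .
    qed
    have 1: "mm (mm g a) (mm g b) = mm (mm g c) (mm g d)" using gg h by simp
    have "mm a g \<in> pp (mm c g) (mm d g)" using distrib[of c d a g] h g by simp
    hence 2: "mm g a \<in> pp (mm g c) (mm g d)" using h g Beg.comm by simp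
    show ?thesis using 1 2 g h mB by (simp add: eqb_iff)
  qed
qed

lemma mo_B: "nm oo \<in> BB" using n_ne[of oo] by simp

lemma SW_B: assumes S4: "a \<in> BB" "b \<in> BB" "c \<in> BB" "d \<in> BB"
  and h: "Bpsg.E3 a b (mm b a) c d (mm d c)"
  shows "Bpsg.E3 b a (mm a b) c d (mm d c)"
proof -
  obtain x y z where w: "x \<in> BB" "y \<in> BB" "z \<in> BB" "eqb a x c y" "eqb b (mm b a) x z" "eqb d (mm d c) y z"
    using h unfolding Bpsg.E3_def by blast
  have "\<exists>x\<in>BB. \<exists>y\<in>BB. \<exists>z\<in>BB. mm a x = mm c y \<and> a = mm x z \<and> c = mm y z \<and>
           a \<in> pp c y \<and> b \<in> pp x z \<and> d \<in> pp y z"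
    apply (rule bexI[of _ x], rule bexI[of _ y], rule bexI[of _ z])
    using w S4 by (auto simp: eqb_iff)
  then obtain t u w where g: "t \<in> BB" "u \<in> BB" "w \<in> BB" "mm b t = mm c u" "b = mm t w" "c = mm u w"
           "b \<in> pp c u" "a \<in> pp t w" "d \<in> pp u w"
    using v[OF S4] by blast
  have "eqb b t c u" "eqb a (mm a b) t w" "eqb d (mm d c) u w"
    using g S4 mB by (auto simp: eqb_iff)
  thus ?thesis unfolding Bpsg.E3_def using g by blast
qed

lemma sg4_B: assumes e: "eqb a b c d" shows "eqb a (mm (nm oo) c) (mm (nm oo) b) d"
proof -
  have h: "a \<in> BB" "b \<in> BB" "c \<in> BB" "d \<in> BB" "mm a b = mm c d" "a \<in> pp c d"
    using e by (auto simp: eqb_iff)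
  have 1: "c \<in> pp a b" using iii h by blast
  have 2: "b \<in> pp (nm a) c" using rev2[OF _ _ _ 1] h by simp
  have "mm b (nm oo) \<in> pp (mm (nm a) (nm oo)) (mm c (nm oo))" using distrib[OF _ _ _ _ 2] h by simp
  moreover have "mm b (nm oo) = nm b" "mm c (nm oo) = nm c" "mm (nm a) (nm oo) = a"
    using h m_comm[of _ "nm oo"] mneg by (metis DiffD1 n_in o_in nn)+
  ultimately have 3: "nm b \<in> pp a (nm c)" by simp
  have bd: "mm b d = mm a c" using arith1 h by blast
  have nb: "nm b \<in> BB" "nm c \<in> BB" using h n_ne by auto
  have 4: "mm (nm b) d = mm a (nm c)"
  proof -
    have "mm (nm b) d = mm (mm (nm oo) b) d" using mneg h by simp
    also have "\<dots> = mm (nm oo) (mm b d)" using h mo_B by (intro Beg.assoc) auto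
    also have "\<dots> = mm (nm oo) (mm a c)" using bd by simp
    also have "\<dots> = mm a (mm (nm oo) c)" using h mo_B by (intro Beg.lcomm) auto
    also have "\<dots> = mm a (nm c)" using mneg h by simp
    finally show ?thesis .
  qed
  have "a \<in> pp (nm b) d" using iii[OF nb(1) h(4) h(1) nb(2) 4 3] .
  thus ?thesis using h nb 4 mneg by (simp add: eqb_iff)
qed

sublocale Bsg: sgrp BB mm oo eqb "nm oo"
proof unfold_locales
  show "nm oo \<in> BB" by (rule mo_B)
  show "eqb a (mm (nm oo) a) oo (nm oo)" if a: "a \<in> BB" for a
  proof -
    have "mm a (mm (nm oo) a) = mm (nm oo) (mm a a)" using a mo_B by (intro Beg.lcomm) auto
    also have "\<dots> = mm oo (nm oo)" using a mo_B Beg.comm[of "nm oo" oo] by simp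
    finally have "mm a (mm (nm oo) a) = mm oo (nm oo)" .
    moreover have "a \<in> pp oo (nm oo)" using ii[of oo] a by simp
    ultimately show ?thesis using a mo_B mB by (simp add: eqb_iff)
  qed
  show "eqb a b c d \<Longrightarrow> eqb a (mm (nm oo) c) (mm (nm oo) b) d" for a b c d by (rule sg4_B)
  show "Bpsg.E3 a1 a2 a3 b1 b2 b3 \<Longrightarrow> Bpsg.E3 b1 b2 b3 c1 c2 c3 \<Longrightarrow> Bpsg.E3 a1 a2 a3 c1 c2 c3"
    for a1 a2 a3 b1 b2 b3 c1 c2 c3
    by (rule Bpsg.E3_trans_of_SW[OF SW_B])
qed

lemma bullet_sg: "is_special_group (bullet F)"
proof -
  have e: "sg_carrier (bullet F) = BB" "sg_mult (bullet F) = mm" "sg_one (bullet F) = oo"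
     "sg_mone (bullet F) = nm oo" by (simp_all add: bullet_def)
  have "sgrp (sg_carrier (bullet F)) (sg_mult (bullet F)) (sg_one (bullet F)) (sg_equiv (bullet F)) (sg_mone (bullet F))"
    unfolding e by (rule Bsg.sgrp_axioms)
  thus ?thesis by (rule sgrp_sg)
qed


lemma bsimps[simp]: "sg_carrier (bullet F) = BB" "sg_mult (bullet F) = mm" "sg_one (bullet F) = oo"
     "sg_mone (bullet F) = nm oo" by (simp_all add: bullet_def)

lemma Mb_simps[simp]: "mr_carrier (M (bullet F)) = Mcarrier (bullet F)" "mr_add (M (bullet F)) = Madd (bullet F)"
  "mr_mult (M (bullet F)) = Mmult (bullet F)" "mr_neg (M (bullet F)) = map_option (sg_neg (bullet F))"
  "mr_zero (M (bullet F)) = None" "mr_one (M (bullet F)) = Some oo"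
  by (simp_all add: M_def)

lemma bneg[simp]: "a \<in> R \<Longrightarrow> sg_neg (bullet F) a = nm a"
  by (simp add: sg_neg_def mneg)

lemma Dl_b: "c \<in> sgrp.Dl BB eqb a b \<longleftrightarrow> (\<exists>d\<in>BB. eqb c d a b) \<and> c \<in> BB"
  using Bsg.Dl_def by auto

lemma counit_iso: "mr_iso (M (bullet F)) F (counit F)"
proof -
  interpret bm: sgM "bullet F" by unfold_locales (rule bullet_sg)
  have Mc: "x \<in> Mcarrier (bullet F) \<longleftrightarrow> x = None \<or> (\<exists>a\<in>BB. x = Some a)" for x
    using bm.Mcar by simp
  define g where "g x = (if x = zz then None else Some x)" for x
  have m1add: "counit F c \<in> pp (counit F a) (counit F b)"
      if a: "a \<in> Mcarrier (bullet F)" and b: "b \<in> Mcarrier (bullet F)" and c: "c \<in> Mcarrier (bullet F)"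
      and cab: "c \<in> Madd (bullet F) a b" for a b c
    proof -
    have cR: "counit F c \<in> R" using c unfolding Mc by (auto simp: counit_def)
    have aR: "counit F a \<in> R" using a unfolding Mc by (auto simp: counit_def)
    have bR: "counit F b \<in> R" using b unfolding Mc by (auto simp: counit_def)
    consider "a = None" | "b = None" | p q where "a = Some p" "b = Some q" "p \<in> BB" "q \<in> BB"
      using a b Mc by blast
    thus ?thesis
    proof cases
      case 1
      hence "c = b" using cab by simp
      thus ?thesis using zadd[OF bR bR] 1 by (simp add: counit_def)
    next
      case 2
      hence "c = a" using cab by simp
      thus ?thesis using add0'[OF aR] 2 by (simp add: counit_def)
    next
      case 3
      show ?thesis
      proof (cases c)
        case None
        hence "p = mm (nm oo) q" using cab 3 bm.NoneIn by simp
        hence "p = nm q" using mneg 3 by simp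
        thus ?thesis using None 3 zero_in[of q] p_comm[of q "nm q"] by (simp add: counit_def)
      next
        case (Some r)
        have r: "r \<in> BB" using c Some Mc by auto
        have "r \<in> sgrp.Dl BB eqb p q" using cab 3 Some bm.SomeIn r by simp
        then obtain d where "eqb r d p q" using Dl_b by blast
        hence "r \<in> pp p q" by (simp add: eqb_iff)
        thus ?thesis using Some 3 by (simp add: counit_def)
      qed
    qed
  qed
  have m1: "mr_morphism (M (bullet F)) F (counit F)"
    unfolding mr_morphism_def Mb_simps
    apply (intro conjI ballI impI)
    subgoal for a using Mc[of a] by (auto simp: counit_def)
    subgoal for a b c by (rule m1add)
    subgoal for a using Mc[of a] by (auto simp: counit_def mneg)
    subgoal by (simp add: counit_def)
    subgoal for a b using Mc[of a] Mc[of b] by (auto simp: counit_def)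
    subgoal by (simp add: counit_def)
    done
  have m2: "mr_morphism F (M (bullet F)) g"
    unfolding mr_morphism_def Mb_simps
  proof (intro conjI ballI impI)
    show "g a \<in> Mcarrier (bullet F)" if "a \<in> R" for a using that Mc by (auto simp: g_def)
    show "g c \<in> Madd (bullet F) (g a) (g b)" if a: "a \<in> R" and b: "b \<in> R" and c: "c \<in> R"
      and cab: "c \<in> pp a b" for a b c
    proof (cases "a = zz")
      case True
      hence "c = b" using cab zadd b c by simp
      thus ?thesis using True by (simp add: g_def)
    next
      case an: False
      show ?thesis
      proof (cases "b = zz")
        case True
        hence "c = a" using cab add0' a c by simp
        thus ?thesis using True by (simp add: g_def)
      next
        case bn: False
        show ?thesis
        proof (cases "c = zz")
          case True
          hence "b = nm a" using uniq a b cab by simp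
          hence "a = mm (nm oo) b" using mneg a b by simp
          thus ?thesis using True an bn a b bm.NoneIn by (simp add: g_def)
        next
          case cn: False
          define d where "d = mm c (mm a b)"
          have dB: "d \<in> BB" unfolding d_def using mB a b c an bn cn by simp
          have cd: "mm c d = mm a b" unfolding d_def using Beg.sq2[of c "mm a b"] mB a b c an bn cn by simp
          have "eqb c d a b" using dB cd cab a b c an bn cn by (simp add: eqb_iff)
          hence "c \<in> sgrp.Dl BB eqb a b" using Dl_b dB c cn by blast
          thus ?thesis using an bn cn a b c bm.SomeIn by (simp add: g_def)
        qed
      qed
    qed
    show "g (nm a) = map_option (sg_neg (bullet F)) (g a)" if "a \<in> R" for a
      using that n_ne mneg by (auto simp: g_def)
    show "g zz = None" by (simp add: g_def)
    show "g (mm a b) = Mmult (bullet F) (g a) (g b)" if "a \<in> R" "b \<in> R" for a b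
      using that mB by (auto simp: g_def)
    show "g oo = Some oo" by (simp add: g_def)
  qed
  have r1: "\<forall>x\<in>mr_carrier (M (bullet F)). g (counit F x) = x"
  proof
    fix x assume "x \<in> mr_carrier (M (bullet F))"
    hence "x = None \<or> (\<exists>a\<in>BB. x = Some a)" using Mc by simp
    thus "g (counit F x) = x" by (elim disjE bexE) (simp_all add: g_def counit_def)
  qed
  have r2: "\<forall>y\<in>R. counit F (g y) = y" by (simp add: g_def counit_def)
  show ?thesis unfolding mr_iso_def using m1 m2 r1 r2 by blast
qed

end

lemma part3: "is_special_multifield F \<Longrightarrow> is_special_group (bullet F)"
  by (rule smf.bullet_sg) (unfold_locales)

lemma part7: "is_special_multifield F \<Longrightarrow> mr_iso (M (bullet F)) F (counit F)"
  by (rule smf.counit_iso) (unfold_locales)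

lemma part4: assumes F: "is_special_multifield F" and K: "is_special_multifield K" and f: "mr_morphism F K f"
  shows "sg_morphism (bullet F) (bullet K) f"
proof -
  interpret a: smf F by unfold_locales (rule F)
  interpret b: smf K by unfold_locales (rule K)
  have fR: "\<And>x. x \<in> mr_carrier F \<Longrightarrow> f x \<in> mr_carrier K" using f unfolding mr_morphism_def by blast
  have fadd: "\<And>a b c. a \<in> mr_carrier F \<Longrightarrow> b \<in> mr_carrier F \<Longrightarrow> c \<in> mr_carrier F \<Longrightarrow>
     c \<in> mr_add F a b \<Longrightarrow> f c \<in> mr_add K (f a) (f b)" using f unfolding mr_morphism_def by blast
  have fneg: "\<And>x. x \<in> mr_carrier F \<Longrightarrow> f (mr_neg F x) = mr_neg K (f x)" using f unfolding mr_morphism_def by blast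
  have fz: "f (mr_zero F) = mr_zero K" using f unfolding mr_morphism_def by blast
  have fm: "\<And>x y. x \<in> mr_carrier F \<Longrightarrow> y \<in> mr_carrier F \<Longrightarrow> f (mr_mult F x y) = mr_mult K (f x) (f y)"
    using f unfolding mr_morphism_def by blast
  have fo: "f (mr_one F) = mr_one K" using f unfolding mr_morphism_def by blast
  have fB: "f x \<in> mr_carrier K - {mr_zero K}" if x: "x \<in> mr_carrier F - {mr_zero F}" for x
  proof -
    have "mr_mult K (f x) (f x) = mr_one K" using fm[of x x] x fo by simp
    moreover have "f x \<in> mr_carrier K" using fR x by simp
    moreover have "f x \<noteq> mr_zero K"
    proof
      assume "f x = mr_zero K"
      hence "mr_mult K (f x) (f x) = mr_zero K" by simp
      thus False using calculation(1) b.o_ne_z by simp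
    qed
    ultimately show ?thesis by simp
  qed
  show ?thesis unfolding sg_morphism_def a.bsimps b.bsimps
  proof (intro conjI ballI allI impI)
    show "f x \<in> mr_carrier K - {mr_zero K}" if "x \<in> mr_carrier F - {mr_zero F}" for x using fB that .
    show "f (mr_mult F x y) = mr_mult K (f x) (f y)" if "x \<in> mr_carrier F - {mr_zero F}" "y \<in> mr_carrier F - {mr_zero F}" for x y
      using fm that by simp
    show "f (mr_neg F (mr_one F)) = mr_neg K (mr_one K)" using fneg fo by simp
    show "sg_equiv (bullet K) (f x) (f y) (f u) (f w)" if e: "sg_equiv (bullet F) x y u w" for x y u w
    proof -
      have h: "x \<in> mr_carrier F - {mr_zero F}" "y \<in> mr_carrier F - {mr_zero F}"
        "u \<in> mr_carrier F - {mr_zero F}" "w \<in> mr_carrier F - {mr_zero F}"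
        "mr_mult F x y = mr_mult F u w" "x \<in> mr_add F u w" using e by (auto simp: a.eqb_iff)
      have "mr_mult K (f x) (f y) = mr_mult K (f u) (f w)" using fm h by (metis DiffD1)
      moreover have "f x \<in> mr_add K (f u) (f w)" using fadd h by blast
      ultimately show ?thesis using fB h by (simp add: b.eqb_iff)
    qed
  qed
qed

lemma part8: assumes F: "is_special_multifield F" and f: "mr_morphism F K f"
  shows "\<forall>x\<in>mr_carrier (M (bullet F)). f (counit F x) = counit K (map_option f x)"
  using f by (auto simp: counit_def mr_morphism_def split: option.splits)


theorem theorem5p12:
  shows
  \<comment> \<open>M is a functor SG \<rightarrow> SMF\<close>
  "(\<forall>G :: 'a sgroup. is_special_group G \<longrightarrow> is_special_multifield (M G)) \<and>
   (\<forall>(G :: 'a sgroup) (H :: 'b sgroup) f. is_special_group G \<longrightarrow> is_special_group H \<longrightarrow>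
       sg_morphism G H f \<longrightarrow> mr_morphism (M G) (M H) (map_option f)) \<and>
   \<comment> \<open>bullet is a functor SMF \<rightarrow> SG\<close>
   (\<forall>F :: 'c mring. is_special_multifield F \<longrightarrow> is_special_group (bullet F)) \<and>
   (\<forall>(F :: 'c mring) (K :: 'd mring) f. is_special_multifield F \<longrightarrow> is_special_multifield K \<longrightarrow>
       mr_morphism F K f \<longrightarrow> sg_morphism (bullet F) (bullet K) f) \<and>
   \<comment> \<open>unit G \<cong> (M G)-bullet, natural\<close>
   (\<forall>G :: 'a sgroup. is_special_group G \<longrightarrow> sg_iso G (bullet (M G)) Some) \<and>
   (\<forall>(G :: 'a sgroup) (H :: 'b sgroup) f. sg_morphism G H f \<longrightarrow>
       (\<forall>x\<in>sg_carrier G. map_option f (Some x) = Some (f x))) \<and>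
   \<comment> \<open>counit M(F-bullet) \<cong> F, natural\<close>
   (\<forall>F :: 'c mring. is_special_multifield F \<longrightarrow> mr_iso (M (bullet F)) F (counit F)) \<and>
   (\<forall>(F :: 'c mring) (K :: 'd mring) f. is_special_multifield F \<longrightarrow> is_special_multifield K \<longrightarrow>
       mr_morphism F K f \<longrightarrow>
       (\<forall>x\<in>mr_carrier (M (bullet F)). f (counit F x) = counit K (map_option f x)))"
  apply (intro conjI allI impI)
  subgoal by (rule part1)
  subgoal by (rule part2)
  subgoal by (rule part3)
  subgoal by (rule part4)
  subgoal by (rule part5)
  subgoal by simp
  subgoal by (rule part7)
  subgoal by (rule part8)
  done

end
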